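(* Let Assumption (QNC-RG) hold and $\tau_0:=\frac1{4c_1}$. There is $M>0$, independent of $K,n$, such that for all $K,n\in\mathbb{N}$ with $\tau=T/K\in(0,\tau_0)$ and any iterates $(x_n^k)_{k=0,\dots,K}\subseteq V_n$ solving (RG), the interpolants satisfy $\|\overline{\boldsymbol{x}}_n^\tau\|_{L^p(I,X)\cap_{\boldsymbol{j}}L^\infty(I,Y)}\le M$, $\|\boldsymbol{j}\hat{\boldsymbol{x}}_n^\tau\|_{L^\infty(I,Y)}\le M$, $\|\mathcal{A}\overline{\boldsymbol{x}}_n^\tau\|_{(L^p(I,X)\cap_{\boldsymbol{j}}L^q(I,Y))^*}\le M$, and $\|e_n(\hat{\boldsymbol{x}}_n^\tau-\overline{\boldsymbol{x}}_n^\tau)\|_{L^{q'}(I,V_n^* )}\le\tau(\|\boldsymbol{f}\|_{L^{p'}(I,X^* )}+M)$.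
   Context: Evolution triple $(V,H,j)$: $V$ reflexive Banach, $H$ Hilbert, $j:V\to H$ linear injective bounded with dense range. $I=(0,T)$, $T<\infty$, $1<p\le q<\infty$. $L^p(I,X)\cap_{\boldsymbol{j}}L^q(I,Y):=\{\boldsymbol{x}\in L^p(I,X):\boldsymbol{j}\boldsymbol{x}\in L^q(I,Y)\}$ with norm $\|\boldsymbol{x}\|_{L^p(I,X)}+\|\boldsymbol{j}\boldsymbol{x}\|_{L^q(I,Y)}$, $(\boldsymbol{j}\boldsymbol{x})(t)=j(\boldsymbol{x}(t))$ (similarly with $q=\infty$). Induced operator $\langle\mathcal{A}\boldsymbol{x},\boldsymbol{y}\rangle=\int_I\langle A(t)\boldsymbol{x}(t),\boldsymbol{y}(t)\rangle_X\,dt$. $e_n:V_n\to V_n^*$ is defined by $\langle e_nv,w\rangle_{V_n}=(jv,jw)_Y$. Assumption (QNC-RG): (i) $(V,H,j)$, $(X,Y,j)$ evolution triples with $V\subseteq X$, $\|\cdot\|_V=\|\cdot\|_X$ on $V$, $H\subseteq Y$, $(\cdot,\cdot)_H=(\cdot,\cdot)_Y$ on $H$; $(V_n)$ closed subspaces of $X$ forming a quasi non-conforming approximation of $V$ in $X$: (QNC.1) a dense $D\subseteq V$ such that each $v\in D$ is the $X$-limit of some $v_n\in V_n$; (QNC.2) if $\boldsymbol{x}_n\in L^p(I,V_{m_n})$, $m_n\to\infty$, $\boldsymbol{x}_n\rightharpoonup\boldsymbol{x}$ in $L^p(I,X)$, then $\boldsymbol{x}\in L^p(I,V)$. (ii)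 $x_0\in H$, $x_n^0\in V_n$, $jx_n^0\to x_0$ in $Y$, $\sup_n\|jx_n^0\|_Y\le\|x_0\|_H$. (iii) $\boldsymbol{f}\in L^{p'}(I,X^* )$. (iv) $A(t):X\to X^*$ satisfies (A.1) pseudo-monotone for a.e. $t$; (A.2) $t\mapsto A(t)x$ Bochner measurable; (A.3) $\langle A(t)x,x\rangle_X\ge c_0\|x\|_X^p-c_1\|jx\|_Y^2-c_2$ ($c_0>0$, $c_1,c_2\ge0$); (A.4) $|\langle A(t)x,y\rangle_X|\le\lambda\|x\|_X^p+\gamma[1+\|jx\|_Y^q+\|jy\|_Y^q+\|y\|_X^p]$ ($\gamma\ge0$, $\lambda\in(0,c_0)$). Scheme (RG): for $\tau=T/K$, $I_k^\tau=((k-1)\tau,k\tau]$, $[\boldsymbol{f}]_k^\tau=\frac1\tau\int_{I_k^\tau}\boldsymbol{f}$, $[A]_k^\tau x=\frac1\tau\int_{I_k^\tau}A(s)x\,ds$, $d_\tau x^k=\frac1\tau(x^k-x^{k-1})$: starting from $x_n^0$, $x_n^k\in V_n$ with $(d_\tau jx_n^k,jv_n)_Y+\langle[A]_k^\tau x_n^k,v_n\rangle_X=\langle[\boldsymbol{f}]_k^\tau,v_n\rangle_X$ for all $v_n\in V_n$. Interpolants: for $t\in I_k^\tau$, $\overline{\boldsymbol{x}}_n^\tau(t)=x_n^k$ and $\hat{\boldsymbol{x}}_n^\tau(t)=(\frac t\tau-(k-1))x_n^k+(k-\frac t\tau)x_n^{k-1}$. *)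

theory Defs
  imports "HOL-Analysis.Analysis"
begin

text \<open>The dual X* of a real normed space is modelled by the type of bounded
linear functionals (blinfun type) with the operator norm; the duality pairing
is function application.\<close>

definition reflexive_space :: "'x::real_normed_vector itself \<Rightarrow> bool" where
  "reflexive_space _ \<longleftrightarrow>
     (\<forall>\<Phi> :: ('x \<Rightarrow>\<^sub>L real) \<Rightarrow>\<^sub>L real. \<exists>x::'x. \<forall>\<phi>. blinfun_apply \<Phi> \<phi> = blinfun_apply \<phi> x)"

definition weak_conv :: "(nat \<Rightarrow> 'x::real_normed_vector) \<Rightarrow> 'x \<Rightarrow> bool" where
  "weak_conv xs x \<longleftrightarrow>
     (\<forall>\<phi> :: 'x \<Rightarrow>\<^sub>L real. (\<lambda>n. blinfun_apply \<phi> (xs n)) \<longlonglongrightarrow> blinfun_apply \<phi> x)"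

definition pseudo_monotone :: "('x::real_normed_vector \<Rightarrow> ('x \<Rightarrow>\<^sub>L real)) \<Rightarrow> bool" where
  "pseudo_monotone B \<longleftrightarrow>
     (\<forall>xs x. weak_conv xs x \<and>
        limsup (\<lambda>n. ereal (blinfun_apply (B (xs n)) (xs n - x))) \<le> 0 \<longrightarrow>
        (\<forall>y. ereal (blinfun_apply (B x) (x - y))
               \<le> liminf (\<lambda>n. ereal (blinfun_apply (B (xs n)) (xs n - y)))))"

definition bochner_measurable :: "real \<Rightarrow> (real \<Rightarrow> 'a::real_normed_vector) \<Rightarrow> bool" where
  "bochner_measurable T u \<longleftrightarrow>
     (\<exists>s :: nat \<Rightarrow> real \<Rightarrow> 'a.
        (\<forall>i. finite (s i ` {0<..<T}) \<and>
             s i \<in> borel_measurable (restrict_space lebesgue {0<..<T})) \<and>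
        (AE t in lebesgue. t \<in> {0<..<T} \<longrightarrow> (\<lambda>i. s i t) \<longlonglongrightarrow> u t))"

definition Lp_int :: "real \<Rightarrow> real \<Rightarrow> (real \<Rightarrow> 'a::real_normed_vector) \<Rightarrow> ennreal" where
  "Lp_int p T u = (\<integral>\<^sup>+ t \<in> {0<..<T}. ennreal (norm (u t) powr p) \<partial>lebesgue)"

definition Lp :: "real \<Rightarrow> real \<Rightarrow> (real \<Rightarrow> 'a::real_normed_vector) set" where
  "Lp p T = {u. bochner_measurable T u \<and> Lp_int p T u < \<infinity>}"

definition Lp_norm :: "real \<Rightarrow> real \<Rightarrow> (real \<Rightarrow> 'a::real_normed_vector) \<Rightarrow> real" where
  "Lp_norm p T u = enn2real (Lp_int p T u) powr (1 / p)"

definition Linf_norm :: "real \<Rightarrow> (real \<Rightarrow> 'a::real_normed_vector) \<Rightarrow> real" where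
  "Linf_norm T u = Inf {C. 0 \<le> C \<and> (AE t in lebesgue. t \<in> {0<..<T} \<longrightarrow> norm (u t) \<le> C)}"

definition LpV :: "real \<Rightarrow> real \<Rightarrow> 'a::real_normed_vector set \<Rightarrow> (real \<Rightarrow> 'a) set" where
  "LpV p T V = {u \<in> Lp p T. AE t in lebesgue. t \<in> {0<..<T} \<longrightarrow> u t \<in> V}"

definition Lp_functional :: "real \<Rightarrow> real \<Rightarrow> ((real \<Rightarrow> 'a::real_normed_vector) \<Rightarrow> real) \<Rightarrow> bool" where
  "Lp_functional p T \<Phi> \<longleftrightarrow>
     (\<forall>u\<in>Lp p T. \<forall>v\<in>Lp p T. \<Phi> (\<lambda>t. u t + v t) = \<Phi> u + \<Phi> v) \<and>
     (\<forall>c. \<forall>u\<in>Lp p T. \<Phi> (\<lambda>t. c *\<^sub>R u t) = c * \<Phi> u) \<and>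
     (\<exists>C. \<forall>u\<in>Lp p T. \<bar>\<Phi> u\<bar> \<le> C * Lp_norm p T u)"

definition Lp_weak_conv :: "real \<Rightarrow> real \<Rightarrow> (nat \<Rightarrow> real \<Rightarrow> 'a::real_normed_vector) \<Rightarrow> (real \<Rightarrow> 'a) \<Rightarrow> bool" where
  "Lp_weak_conv p T xs x \<longleftrightarrow>
     (\<forall>i. xs i \<in> Lp p T) \<and> x \<in> Lp p T \<and>
     (\<forall>\<Phi>. Lp_functional p T \<Phi> \<longrightarrow> (\<lambda>i. \<Phi> (xs i)) \<longlonglongrightarrow> \<Phi> x)"

definition LpLq :: "real \<Rightarrow> real \<Rightarrow> real \<Rightarrow> ('x::real_normed_vector \<Rightarrow> 'y::real_normed_vector)
                     \<Rightarrow> (real \<Rightarrow> 'x) set" where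
  "LpLq p q T j = {u \<in> Lp p T. (\<lambda>t. j (u t)) \<in> Lp q T}"

definition LpLq_norm :: "real \<Rightarrow> real \<Rightarrow> real \<Rightarrow> ('x::real_normed_vector \<Rightarrow> 'y::real_normed_vector)
                     \<Rightarrow> (real \<Rightarrow> 'x) \<Rightarrow> real" where
  "LpLq_norm p q T j u = Lp_norm p T u + Lp_norm q T (\<lambda>t. j (u t))"

definition LpLinf_norm :: "real \<Rightarrow> real \<Rightarrow> ('x::real_normed_vector \<Rightarrow> 'y::real_normed_vector)
                     \<Rightarrow> (real \<Rightarrow> 'x) \<Rightarrow> real" where
  "LpLinf_norm p T j u = Lp_norm p T u + Linf_norm T (\<lambda>t. j (u t))"

text \<open>Dual norm in V_n* of e_n v, where <e_n v, w> = (j v, j w)_Y.\<close>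
definition en_norm :: "('x::real_normed_vector \<Rightarrow> 'y::real_inner) \<Rightarrow> 'x set \<Rightarrow> 'x \<Rightarrow> real" where
  "en_norm j W v = Sup {\<bar>inner (j v) (j w)\<bar> | w. w \<in> W \<and> norm w \<le> 1}"

definition I_k :: "real \<Rightarrow> nat \<Rightarrow> real set" where
  "I_k \<tau> k = {(real k - 1) * \<tau> <.. real k * \<tau>}"

definition avg_f :: "real \<Rightarrow> nat \<Rightarrow> (real \<Rightarrow> ('x::real_normed_vector \<Rightarrow>\<^sub>L real)) \<Rightarrow> 'x \<Rightarrow> real" where
  "avg_f \<tau> k f v = (1 / \<tau>) * (LINT s : I_k \<tau> k | lebesgue. blinfun_apply (f s) v)"

definition avg_A :: "real \<Rightarrow> nat \<Rightarrow> (real \<Rightarrow> 'x::real_normed_vector \<Rightarrow> ('x \<Rightarrow>\<^sub>L real)) \<Rightarrow> 'x \<Rightarrow> 'x \<Rightarrow> real" where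
  "avg_A \<tau> k A x v = (1 / \<tau>) * (LINT s : I_k \<tau> k | lebesgue. blinfun_apply (A s x) v)"

definition RG_solution ::
  "('x::real_normed_vector \<Rightarrow> 'y::real_inner) \<Rightarrow> (real \<Rightarrow> 'x \<Rightarrow> ('x \<Rightarrow>\<^sub>L real))
   \<Rightarrow> (real \<Rightarrow> ('x \<Rightarrow>\<^sub>L real)) \<Rightarrow> 'x set \<Rightarrow> real \<Rightarrow> nat \<Rightarrow> 'x \<Rightarrow> (nat \<Rightarrow> 'x) \<Rightarrow> bool" where
  "RG_solution j A f W \<tau> K x0 xs \<longleftrightarrow>
     xs 0 = x0 \<and> (\<forall>k\<le>K. xs k \<in> W) \<and>
     (\<forall>k\<in>{1..K}. \<forall>v\<in>W.
        inner ((1 / \<tau>) *\<^sub>R (j (xs k) - j (xs (k - 1)))) (j v) + avg_A \<tau> k A (xs k) v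
        = avg_f \<tau> k f v)"

text \<open>Piecewise constant interpolant: equals x^k on ((k-1)\<tau>, k\<tau>].\<close>
definition xbar :: "real \<Rightarrow> (nat \<Rightarrow> 'x::real_normed_vector) \<Rightarrow> real \<Rightarrow> 'x" where
  "xbar \<tau> xs t = xs (nat \<lceil>t / \<tau>\<rceil>)"

definition xhat :: "real \<Rightarrow> (nat \<Rightarrow> 'x::real_normed_vector) \<Rightarrow> real \<Rightarrow> 'x" where
  "xhat \<tau> xs t = (let k = nat \<lceil>t / \<tau>\<rceil> in
      (t / \<tau> - (real k - 1)) *\<^sub>R xs k + (real k - t / \<tau>) *\<^sub>R xs (k - 1))"

end

theory Submission
  imports Defs
begin

lemma id_leb_meas[measurable]: "(\<lambda>x::real. x) \<in> borel_measurable lebesgue"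
  by (intro measurable_completion) simp

lemma Ik_sets[measurable]: "I_k \<tau> k \<in> sets lebesgue"
  unfolding I_k_def by simp

lemma Ik_measure: "0 < \<tau> \<Longrightarrow> emeasure lebesgue (I_k \<tau> k) = ennreal \<tau>"
  unfolding I_k_def by (simp add: algebra_simps)

lemma AE_noteq: "AE t in lebesgue. t \<noteq> (c::real)"
  by (rule AE_completion) (rule AE_lborel_singleton)

lemma meas_version:
  fixes u :: "real \<Rightarrow> 'a::real_normed_vector" and g :: "'a \<Rightarrow> real"
  assumes bm: "bochner_measurable T u" and g: "continuous_on UNIV g"
  shows "\<exists>G. G \<in> borel_measurable lebesgue \<and> (AE t in lebesgue. t \<in> {0<..<T} \<longrightarrow> g (u t) = G t)"
proof -
  obtain s :: "nat \<Rightarrow> real \<Rightarrow> 'a" where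
    s: "\<And>i. s i \<in> borel_measurable (restrict_space lebesgue {0<..<T})"
    and ae: "AE t in lebesgue. t \<in> {0<..<T} \<longrightarrow> (\<lambda>i. s i t) \<longlonglongrightarrow> u t"
    using bm unfolding bochner_measurable_def by blast
  define h where "h i t = (if t \<in> {0<..<T} then g (s i t) else 0)" for i t
  have hm: "h i \<in> borel_measurable lebesgue" for i
  proof -
    have "(\<lambda>t. g (s i t)) \<in> borel_measurable (restrict_space lebesgue {0<..<T})"
      by (rule borel_measurable_continuous_on[OF g s])
    then show ?thesis unfolding h_def
      by (subst (asm) measurable_restrict_space_iff) simp_all
  qed
  define G where "G t = lim (\<lambda>i. h i t)" for t
  have "G \<in> borel_measurable lebesgue" unfolding G_def
    by (rule borel_measurable_lim_metric[OF hm])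
  moreover have "AE t in lebesgue. t \<in> {0<..<T} \<longrightarrow> g (u t) = G t"
    using ae
  proof eventually_elim
    case (elim t)
    show ?case
    proof
      assume t: "t \<in> {0<..<T}"
      then have "(\<lambda>i. s i t) \<longlonglongrightarrow> u t" using elim by blast
      then have "(\<lambda>i. g (s i t)) \<longlonglongrightarrow> g (u t)"
      proof -
        have "isCont g (u t)" using g by (simp add: continuous_on_eq_continuous_at)
        then show ?thesis using \<open>(\<lambda>i. s i t) \<longlonglongrightarrow> u t\<close> by (rule isCont_tendsto_compose)
      qed
      moreover have "(\<lambda>i. h i t) = (\<lambda>i. g (s i t))" using t unfolding h_def by (intro ext) simp
      ultimately have "(\<lambda>i. h i t) \<longlonglongrightarrow> g (u t)" by simp
      then show "g (u t) = G t" unfolding G_def by (rule limI[symmetric])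
    qed
  qed
  ultimately show ?thesis by blast
qed


lemma Ik_sub: "0 < \<tau> \<Longrightarrow> \<tau> = T / real K \<Longrightarrow> 1 \<le> k \<Longrightarrow> k \<le> K \<Longrightarrow> I_k \<tau> k \<subseteq> {0<..T}"
proof
  fix t assume a: "0 < \<tau>" "\<tau> = T / real K" "1 \<le> k" "k \<le> K" and t: "t \<in> I_k \<tau> k"
  have K: "real K > 0" using a(3,4) by linarith
  have T: "real K * \<tau> = T" unfolding a(2) using K by simp
  have t1: "(real k - 1) * \<tau> < t" and t2: "t \<le> real k * \<tau>" using t unfolding I_k_def by auto
  have "(real k - 1) * \<tau> \<ge> 0" using a(1,3) by simp
  moreover have "real k * \<tau> \<le> real K * \<tau>" using a(1,4) by (simp add: mult_right_mono)
  ultimately show "t \<in> {0<..T}" using t1 t2 T by (simp add: greaterThanAtMost_iff)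
qed

lemma AE_Ik: "0 < \<tau> \<Longrightarrow> \<tau> = T / real K \<Longrightarrow> 1 \<le> k \<Longrightarrow> k \<le> K \<Longrightarrow>
   AE t in lebesgue. t \<in> I_k \<tau> k \<longrightarrow> t \<in> {0<..<T}"
proof -
  assume a: "0 < \<tau>" "\<tau> = T / real K" "1 \<le> k" "k \<le> K"
  have s: "I_k \<tau> k \<subseteq> {0<..T}" by (rule Ik_sub[OF a])
  show ?thesis
  proof (rule AE_mp[OF AE_noteq[of T]], rule AE_I2, intro impI)
    fix t assume "t \<noteq> T" "t \<in> I_k \<tau> k"
    then have "t \<in> {0<..T}" "t \<noteq> T" using s by blast+
    then show "t \<in> {0<..<T}" by auto
  qed
qed

lemma ceil_Ik:
  assumes "0 < \<tau>" "1 \<le> k"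
  shows "t \<in> I_k \<tau> k \<longleftrightarrow> (0 < t \<and> nat \<lceil>t / \<tau>\<rceil> = k)"
proof -
  have "t \<in> I_k \<tau> k \<longleftrightarrow> real k - 1 < t / \<tau> \<and> t / \<tau> \<le> real k"
    unfolding I_k_def using assms by (auto simp: field_simps)
  also have "\<dots> \<longleftrightarrow> \<lceil>t / \<tau>\<rceil> = int k"
    by (simp add: ceiling_eq_iff)
  also have "\<dots> \<longleftrightarrow> (0 < t \<and> nat \<lceil>t / \<tau>\<rceil> = k)"
  proof
    assume h: "\<lceil>t / \<tau>\<rceil> = int k"
    then have "\<lceil>t / \<tau>\<rceil> > 0" using assms by simp
    then have "t / \<tau> > 0" by simp
    then have "t > 0" using assms by (simp add: zero_less_divide_iff)
    then show "0 < t \<and> nat \<lceil>t / \<tau>\<rceil> = k" using h by simp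
  next
    assume h: "0 < t \<and> nat \<lceil>t / \<tau>\<rceil> = k"
    then have "t / \<tau> > 0" using assms by simp
    then have "\<lceil>t / \<tau>\<rceil> > 0" by simp
    then show "\<lceil>t / \<tau>\<rceil> = int k" using h by linarith
  qed
  finally show ?thesis .
qed

lemma ceil_range:
  assumes "0 < \<tau>" "\<tau> = T / real K" "t \<in> {0<..<T}"
  shows "1 \<le> nat \<lceil>t / \<tau>\<rceil> \<and> nat \<lceil>t / \<tau>\<rceil> \<le> K"
proof -
  have K: "real K > 0" using assms(1,2) by (cases "K = 0") auto
  have T: "T = \<tau> * real K" using assms(2) K by simp
  have p: "t / \<tau> > 0" using assms(1,3) by simp
  have "t \<le> \<tau> * real K" using assms(3) T by simp
  then have q: "t / \<tau> \<le> real K" using assms(1) by (simp add: divide_le_eq mult.commute)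
  have c1: "\<lceil>t / \<tau>\<rceil> > 0" using p by simp
  have c2: "\<lceil>t / \<tau>\<rceil> \<le> int K" using q by (simp add: ceiling_le_iff)
  show ?thesis using c1 c2 by linarith
qed

lemma sum_Ik:
  assumes tau: "0 < \<tau>" "\<tau> = T / real K" and h[measurable]: "h \<in> borel_measurable lebesgue"
  shows "(\<Sum>k\<in>{1..K}. \<integral>\<^sup>+ t \<in> I_k \<tau> k. h t \<partial>lebesgue) = (\<integral>\<^sup>+ t \<in> {0<..<T}. h t \<partial>lebesgue)"
proof -
  have "(\<Sum>k\<in>{1..K}. \<integral>\<^sup>+ t \<in> I_k \<tau> k. h t \<partial>lebesgue)
      = (\<integral>\<^sup>+ t. (\<Sum>k\<in>{1..K}. h t * indicator (I_k \<tau> k) t) \<partial>lebesgue)"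
    by (rule nn_integral_sum[symmetric]) measurable
  also have "\<dots> = (\<integral>\<^sup>+ t. h t * indicator {0<..<T} t \<partial>lebesgue)"
  proof (rule nn_integral_cong_AE)
    show "AE t in lebesgue. (\<Sum>k\<in>{1..K}. h t * indicator (I_k \<tau> k) t) = h t * indicator {0<..<T} t"
      using AE_noteq[of T]
    proof eventually_elim
      case (elim t)
      show ?case
      proof (cases "t \<in> {0<..<T}")
        case True
        define m where "m = nat \<lceil>t / \<tau>\<rceil>"
        have m: "1 \<le> m" "m \<le> K" using ceil_range[OF tau True] m_def by auto
        have "\<And>k. k \<in> {1..K} \<Longrightarrow> indicator (I_k \<tau> k) t = (if k = m then 1 else (0::ennreal))"
          using ceil_Ik[OF tau(1)] True m_def by (auto simp: indicator_def)
        then have "(\<Sum>k\<in>{1..K}. h t * indicator (I_k \<tau> k) t) = (\<Sum>k\<in>{1..K}. if k = m then h t else 0)"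
          by (intro sum.cong) auto
        also have "\<dots> = h t" using m by simp
        finally show ?thesis using True by simp
      next
        case False
        then have "t \<notin> {0<..T}" using elim by auto
        then have "\<And>k. k \<in> {1..K} \<Longrightarrow> t \<notin> I_k \<tau> k" using Ik_sub[OF tau] by (meson atLeastAtMost_iff subsetD)
        then show ?thesis using False by simp
      qed
    qed
  qed
  finally show ?thesis .
qed

lemma step_int:
  assumes tau: "0 < \<tau>" "\<tau> = T / real K"
  shows "(\<integral>\<^sup>+ t \<in> {0<..<T}. c (nat \<lceil>t / \<tau>\<rceil>) \<partial>lebesgue) = (\<Sum>k\<in>{1..K}. ennreal \<tau> * c k)"
proof -
  have "(\<integral>\<^sup>+ t \<in> {0<..<T}. c (nat \<lceil>t / \<tau>\<rceil>) \<partial>lebesgue)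
     = (\<Sum>k\<in>{1..K}. \<integral>\<^sup>+ t \<in> I_k \<tau> k. c (nat \<lceil>t / \<tau>\<rceil>) \<partial>lebesgue)"
    by (rule sum_Ik[OF tau, symmetric]) measurable
  also have "\<dots> = (\<Sum>k\<in>{1..K}. ennreal \<tau> * c k)"
  proof (rule sum.cong)
    fix k assume k: "k \<in> {1..K}"
    have "(\<integral>\<^sup>+ t \<in> I_k \<tau> k. c (nat \<lceil>t / \<tau>\<rceil>) \<partial>lebesgue) = (\<integral>\<^sup>+ t. c k * indicator (I_k \<tau> k) t \<partial>lebesgue)"
      using ceil_Ik[OF tau(1), of k] k by (intro nn_integral_cong) (auto simp: indicator_def)
    also have "\<dots> = c k * ennreal \<tau>" using Ik_measure[OF tau(1)] by (simp add: nn_integral_cmult_indicator)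
    finally show "(\<integral>\<^sup>+ t \<in> I_k \<tau> k. c (nat \<lceil>t / \<tau>\<rceil>) \<partial>lebesgue) = ennreal \<tau> * c k"
      by (simp add: mult.commute)
  qed simp
  finally show ?thesis .
qed

lemma set_int_bound:
  fixes g :: "real \<Rightarrow> real"
  assumes S: "S \<in> sets lebesgue" and b: "(\<integral>\<^sup>+ t \<in> S. ennreal \<bar>g t\<bar> \<partial>lebesgue) \<le> ennreal r" and r: "0 \<le> r"
  shows "\<bar>LINT t : S | lebesgue. g t\<bar> \<le> r"
proof (cases "integrable lebesgue (\<lambda>t. indicator S t *\<^sub>R g t)")
  case True
  have "ennreal (norm (integral\<^sup>L lebesgue (\<lambda>t. indicator S t *\<^sub>R g t)))
      \<le> (\<integral>\<^sup>+ t. norm (indicator S t *\<^sub>R g t) \<partial>lebesgue)"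
    by (rule integral_norm_bound_ennreal[OF True])
  also have "\<dots> = (\<integral>\<^sup>+ t \<in> S. ennreal \<bar>g t\<bar> \<partial>lebesgue)"
    by (intro nn_integral_cong) (auto simp: indicator_def)
  also have "\<dots> \<le> ennreal r" by (rule b)
  finally show ?thesis using r unfolding set_lebesgue_integral_def by (simp add: ennreal_le_iff)
next
  case False
  then show ?thesis using r unfolding set_lebesgue_integral_def by (simp add: not_integrable_integral_eq)
qed

lemma leb_AE_meas:
  fixes g a :: "real \<Rightarrow> real"
  assumes a: "a \<in> borel_measurable lebesgue" and ae: "AE t in lebesgue. g t = a t"
  shows "g \<in> borel_measurable lebesgue"
proof (rule borel_measurableI_le)
  fix c
  have A: "{w \<in> space lebesgue. a w \<le> c} \<in> sets lebesgue" using a by measurable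
  have B: "AE w in lebesgue. w \<in> {w \<in> space lebesgue. a w \<le> c} \<longleftrightarrow> w \<in> {w \<in> space lebesgue. g w \<le> c}"
    using ae by eventually_elim auto
  show "{w \<in> space lebesgue. g w \<le> c} \<in> sets lebesgue"
    by (rule completion.in_sets_AE[OF B A]) (rule Collect_subset)
qed

lemma set_int_lower:
  fixes g a :: "real \<Rightarrow> real"
  assumes S[measurable]: "S \<in> sets lebesgue" and mS: "emeasure lebesgue S = ennreal \<tau>" and tau: "0 \<le> \<tau>"
    and a[measurable]: "a \<in> borel_measurable lebesgue"
    and ga: "AE t in lebesgue. t \<in> S \<longrightarrow> g t = a t"
    and gL: "AE t in lebesgue. t \<in> S \<longrightarrow> \<bar>g t\<bar> \<le> L"
    and gc: "AE t in lebesgue. t \<in> S \<longrightarrow> c \<le> g t"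
  shows "c * \<tau> \<le> (LINT t : S | lebesgue. g t)"
proof -
  have hm: "(\<lambda>t. indicator S t * g t) \<in> borel_measurable lebesgue"
  proof (rule leb_AE_meas[of "\<lambda>t. indicator S t * a t"])
    show "(\<lambda>t. indicator S t * a t) \<in> borel_measurable lebesgue" by measurable
    show "AE t in lebesgue. indicator S t * g t = indicator S t * a t"
      using ga by eventually_elim (auto simp: indicator_def)
  qed
  have int: "set_integrable lebesgue S g"
    unfolding set_integrable_def
  proof (rule integrableI_bounded_set[where A=S and B=L])
    show "(\<lambda>t. indicator S t *\<^sub>R g t) \<in> borel_measurable lebesgue" using hm by simp
    show "emeasure lebesgue S < \<infinity>" using mS by simp
    show "AE x in lebesgue. x \<in> S \<longrightarrow> norm (indicator S x *\<^sub>R g x) \<le> L"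
    proof (rule AE_mp[OF gL], rule AE_I2, intro impI)
      fix x assume "x \<in> S \<longrightarrow> \<bar>g x\<bar> \<le> L" "x \<in> S"
      then show "norm (indicator S x *\<^sub>R g x) \<le> L" by (simp only: indicator_simps scaleR_one real_norm_def)
    qed
    show "S \<in> sets lebesgue" by (rule S)
    show "AE x in lebesgue. x \<notin> S \<longrightarrow> indicator S x *\<^sub>R g x = 0" by (rule AE_I2) simp
  qed
  have int2: "set_integrable lebesgue S (\<lambda>_. c)"
    unfolding set_integrable_def using S mS by (intro integrable_indicator) simp_all
  have "(LINT t : S | lebesgue. c) \<le> (LINT t : S | lebesgue. g t)"
    using int2 int gc by (intro set_integral_mono_AE) auto
  moreover have "(LINT t : S | lebesgue. c) = c * \<tau>"
  proof -
    have "(LINT t : S | lebesgue. c) = measure lebesgue S *\<^sub>R c"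
      using mS by (intro set_integral_const S) simp
    also have "measure lebesgue S = \<tau>" using mS tau unfolding measure_def by simp
    finally show ?thesis by simp
  qed
  ultimately show ?thesis by simp
qed


lemma young1:
  fixes a b p :: real
  assumes "0 \<le> a" "0 \<le> b" "1 < p"
  shows "a * b \<le> a powr p + b powr (p / (p - 1))"
proof -
  have q: "p / (p - 1) > 1" using assms(3) by (simp add: field_simps)
  have e: "1 / p + 1 / (p / (p - 1)) = 1" using assms(3) by (simp add: field_simps)
  have "a * b \<le> a powr p / p + b powr (p / (p - 1)) / (p / (p - 1))"
    by (rule Youngs_inequality[OF assms(3) q e assms(1,2)])
  also have "a powr p / p \<le> a powr p" using assms(3) by (simp add: divide_le_eq mult_le_cancel_left1)
  also have "b powr (p / (p - 1)) / (p / (p - 1)) \<le> b powr (p / (p - 1))"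
  proof -
    have b0: "b powr (p / (p - 1)) \<ge> 0" by simp
    have "b powr (p / (p - 1)) * (p - 1) \<le> b powr (p / (p - 1)) * p"
      using b0 by (intro mult_left_mono) auto
    then show ?thesis using q assms(3) by (simp add: divide_le_eq)
  qed
  finally show ?thesis by simp
qed

lemma young_eps:
  fixes a b p e :: real
  assumes "0 \<le> a" "0 \<le> b" "1 < p" "0 < e"
  shows "a * b \<le> e powr p * a powr p + e powr (- (p / (p - 1))) * b powr (p / (p - 1))"
proof -
  have "a * b = (e * a) * (b / e)" using assms(4) by simp
  also have "\<dots> \<le> (e * a) powr p + (b / e) powr (p / (p - 1))"
    using assms by (intro young1) auto
  also have "(e * a) powr p = e powr p * a powr p" using assms by (simp add: powr_mult)
  also have "(b / e) powr (p / (p - 1)) = e powr (- (p / (p - 1))) * b powr (p / (p - 1))"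
    using assms by (simp add: powr_divide powr_minus_divide)
  finally show ?thesis .
qed

lemma inner_lower:
  fixes u w :: "'y::real_inner"
  shows "inner (u - w) u \<ge> ((norm u)\<^sup>2 - (norm w)\<^sup>2) / 2"
proof -
  have "0 \<le> (norm (u - w))\<^sup>2" by simp
  also have "(norm (u - w))\<^sup>2 = (norm u)\<^sup>2 - 2 * inner u w + (norm w)\<^sup>2"
    by (simp add: power2_norm_eq_inner inner_diff_left inner_diff_right inner_commute)
  finally have "2 * inner u w \<le> (norm u)\<^sup>2 + (norm w)\<^sup>2" by simp
  moreover have "inner (u - w) u = (norm u)\<^sup>2 - inner u w"
    by (simp add: power2_norm_eq_inner inner_diff_left inner_diff_right inner_commute)
  ultimately show ?thesis by simp
qed

lemma set_int_bound2:
  fixes g H :: "real \<Rightarrow> real"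
  assumes S[measurable]: "S \<in> sets lebesgue" and mS: "emeasure lebesgue S = ennreal \<tau>" and tau: "0 \<le> \<tau>"
    and H[measurable]: "H \<in> borel_measurable lebesgue" and H0: "\<And>t. 0 \<le> H t"
    and ab: "0 \<le> a" "0 \<le> b"
    and Hint: "(\<integral>\<^sup>+ t \<in> S. ennreal (H t) \<partial>lebesgue) = ennreal h" and h: "0 \<le> h"
    and bd: "AE t in lebesgue. t \<in> S \<longrightarrow> \<bar>g t\<bar> \<le> a + b * H t"
  shows "\<bar>LINT t : S | lebesgue. g t\<bar> \<le> a * \<tau> + b * h"
proof (rule set_int_bound[OF S])
  show "0 \<le> a * \<tau> + b * h" using ab tau h by simp
  have "(\<integral>\<^sup>+ t \<in> S. ennreal \<bar>g t\<bar> \<partial>lebesgue) \<le> (\<integral>\<^sup>+ t. (ennreal a * indicator S t + ennreal b * (ennreal (H t) * indicator S t)) \<partial>lebesgue)"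
  proof (rule nn_integral_mono_AE)
    show "AE t in lebesgue. ennreal \<bar>g t\<bar> * indicator S t \<le> ennreal a * indicator S t + ennreal b * (ennreal (H t) * indicator S t)"
    proof (rule AE_mp[OF bd], rule AE_I2, intro impI)
      fix t assume h1: "t \<in> S \<longrightarrow> \<bar>g t\<bar> \<le> a + b * H t"
      show "ennreal \<bar>g t\<bar> * indicator S t \<le> ennreal a * indicator S t + ennreal b * (ennreal (H t) * indicator S t)"
      proof (cases "t \<in> S")
        case True
        then have "ennreal \<bar>g t\<bar> \<le> ennreal (a + b * H t)" using h1 by (simp add: ennreal_leI)
        also have "\<dots> = ennreal a + ennreal b * ennreal (H t)"
          using ab H0[of t] by (simp add: ennreal_plus ennreal_mult)
        finally show ?thesis using True by simp
      qed simp
    qed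
  qed
  also have "\<dots> = (\<integral>\<^sup>+ t. ennreal a * indicator S t \<partial>lebesgue) + (\<integral>\<^sup>+ t. ennreal b * (ennreal (H t) * indicator S t) \<partial>lebesgue)"
    by (rule nn_integral_add) measurable
  also have "(\<integral>\<^sup>+ t. ennreal a * indicator S t \<partial>lebesgue) = ennreal a * ennreal \<tau>"
    using mS by (simp add: nn_integral_cmult_indicator)
  also have "(\<integral>\<^sup>+ t. ennreal b * (ennreal (H t) * indicator S t) \<partial>lebesgue) = ennreal b * ennreal h"
    using Hint by (subst nn_integral_cmult) measurable
  also have "ennreal a * ennreal \<tau> + ennreal b * ennreal h = ennreal (a * \<tau> + b * h)"
    using ab tau h by (simp add: ennreal_plus ennreal_mult)
  finally show "(\<integral>\<^sup>+ t \<in> S. ennreal \<bar>g t\<bar> \<partial>lebesgue) \<le> ennreal (a * \<tau> + b * h)" .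
qed


lemma gron:
  fixes e g :: "nat \<Rightarrow> real" and b :: real
  assumes b: "1 \<le> b" and g: "\<And>k. 0 \<le> g k"
    and step: "\<And>k. 1 \<le> k \<Longrightarrow> k \<le> K \<Longrightarrow> e k \<le> b * (e (k - 1) + g k)"
  shows "k \<le> K \<Longrightarrow> e k \<le> b ^ k * (e 0 + (\<Sum>i\<in>{1..k}. g i))"
proof (induction k)
  case 0
  then show ?case by simp
next
  case (Suc m)
  then have IH: "e m \<le> b ^ m * (e 0 + (\<Sum>i\<in>{1..m}. g i))" by simp
  have "e (Suc m) \<le> b * (e m + g (Suc m))" using step[of "Suc m"] Suc.prems by simp
  also have "\<dots> \<le> b * (b ^ m * (e 0 + (\<Sum>i\<in>{1..m}. g i)) + g (Suc m))"
    using IH b by (intro mult_left_mono) auto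
  also have "\<dots> = b ^ Suc m * (e 0 + (\<Sum>i\<in>{1..m}. g i)) + b * g (Suc m)"
    by (simp add: algebra_simps)
  also have "b * g (Suc m) \<le> b ^ Suc m * g (Suc m)"
  proof (rule mult_right_mono)
    show "b \<le> b ^ Suc m" using b by (metis power_one_right power_increasing Suc_eq_plus1 le_add2)
  qed (rule g)
  also have "b ^ Suc m * (e 0 + (\<Sum>i\<in>{1..m}. g i)) + b ^ Suc m * g (Suc m) = b ^ Suc m * (e 0 + (\<Sum>i\<in>{1..Suc m}. g i))"
    by (simp add: algebra_simps)
  finally show ?case by simp
qed

lemma telesc:
  fixes e :: "nat \<Rightarrow> real"
  shows "(\<Sum>k\<in>{1..K}. e (k - 1) - e k) = e 0 - e K"
  by (induction K) simp_all

locale data =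
  fixes j :: "'x::banach \<Rightarrow> 'y::{real_inner, complete_space}"
    and Vn :: "nat \<Rightarrow> 'x set"
    and T p q c0 c1 c2 lam \<gamma> Kj :: real
    and x0 :: 'y and x0n :: "nat \<Rightarrow> 'x"
    and f :: "real \<Rightarrow> ('x \<Rightarrow>\<^sub>L real)"
    and A :: "real \<Rightarrow> 'x \<Rightarrow> ('x \<Rightarrow>\<^sub>L real)"
    and Fm :: "real \<Rightarrow> real"
  assumes T: "0 < T"
    and pq: "1 < p" "p \<le> q"
    and j_lin: "bounded_linear j" and Kj: "0 < Kj" "\<And>x. norm (j x) \<le> Kj * norm x"
    and Vn_sub: "\<And>n. subspace (Vn n)"
    and x0n_bd: "\<And>n. norm (j (x0n n)) \<le> norm x0"
    and Fm: "Fm \<in> borel_measurable lebesgue" "\<And>t. 0 \<le> Fm t"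
            "AE t in lebesgue. t \<in> {0<..<T} \<longrightarrow> norm (f t) = Fm t"
    and Ffin: "Lp_int (p / (p - 1)) T f < \<infinity>"
    and A2: "\<And>x. bochner_measurable T (\<lambda>t. A t x)"
    and cst: "0 < c0" "0 \<le> c1" "0 \<le> c2" "0 \<le> \<gamma>" "0 < lam" "lam < c0"
    and A3: "AE t in lebesgue. t \<in> {0<..<T} \<longrightarrow>
               (\<forall>x. blinfun_apply (A t x) x \<ge> c0 * norm x powr p - c1 * (norm (j x))\<^sup>2 - c2)"
    and A4: "AE t in lebesgue. t \<in> {0<..<T} \<longrightarrow>
               (\<forall>x y. \<bar>blinfun_apply (A t x) y\<bar> \<le> lam * norm x powr p
                  + \<gamma> * (1 + norm (j x) powr q + norm (j y) powr q + norm y powr p))"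
begin

definition "pp = p / (p - 1)"
definition "Cf = ((c0 / 2) powr (1 / p)) powr (- pp)"
definition "Ftot = enn2real (Lp_int pp T f)"
definition "phi \<tau> k = enn2real (\<integral>\<^sup>+ t \<in> I_k \<tau> k. ennreal (Fm t powr pp) \<partial>lebesgue)"

lemma pp_gt1: "1 < pp" unfolding pp_def using pq by (simp add: field_simps)

lemma Lp_int_f: "Lp_int pp T f = (\<integral>\<^sup>+ t \<in> {0<..<T}. ennreal (Fm t powr pp) \<partial>lebesgue)"
  unfolding Lp_int_def
proof (rule nn_integral_cong_AE)
  show "AE t in lebesgue. ennreal (norm (f t) powr pp) * indicator {0<..<T} t = ennreal (Fm t powr pp) * indicator {0<..<T} t"
  proof (rule AE_mp[OF Fm(3)], rule AE_I2, intro impI)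
    fix t assume "t \<in> {0<..<T} \<longrightarrow> norm (f t) = Fm t"
    then show "ennreal (norm (f t) powr pp) * indicator {0<..<T} t = ennreal (Fm t powr pp) * indicator {0<..<T} t"
      by (cases "t \<in> {0<..<T}") simp_all
  qed
qed

lemma phi_props:
  assumes tau: "0 < \<tau>" "\<tau> = T / real K"
  shows "\<And>k. k \<in> {1..K} \<Longrightarrow> (\<integral>\<^sup>+ t \<in> I_k \<tau> k. ennreal (Fm t powr pp) \<partial>lebesgue) = ennreal (phi \<tau> k)"
    and "\<And>k. 0 \<le> phi \<tau> k"
    and "(\<Sum>k\<in>{1..K}. phi \<tau> k) = Ftot"
proof -
  have meas: "(\<lambda>t. ennreal (Fm t powr pp)) \<in> borel_measurable lebesgue" using Fm(1) by measurable
  have sum: "(\<Sum>k\<in>{1..K}. \<integral>\<^sup>+ t \<in> I_k \<tau> k. ennreal (Fm t powr pp) \<partial>lebesgue) = Lp_int pp T f"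
    unfolding Lp_int_f by (rule sum_Ik[OF tau meas])
  have fin: "(\<integral>\<^sup>+ t \<in> I_k \<tau> k. ennreal (Fm t powr pp) \<partial>lebesgue) < \<infinity>" if k: "k \<in> {1..K}" for k
  proof -
    have sub: "I_k \<tau> k \<subseteq> {0<..T}" using Ik_sub[OF tau] k by simp
    have "(\<integral>\<^sup>+ t \<in> I_k \<tau> k. ennreal (Fm t powr pp) \<partial>lebesgue) \<le> (\<integral>\<^sup>+ t. ennreal (Fm t powr pp) * indicator {0<..T} t \<partial>lebesgue)"
      using sub by (intro nn_integral_mono) (auto simp: indicator_def)
    also have "\<dots> = Lp_int pp T f"
      unfolding Lp_int_f
    proof (rule nn_integral_cong_AE)
      show "AE t in lebesgue. ennreal (Fm t powr pp) * indicator {0<..T} t = ennreal (Fm t powr pp) * indicator {0<..<T} t"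
        by (rule AE_mp[OF AE_noteq[of T]], rule AE_I2) (auto simp: indicator_def)
    qed
    also have "\<dots> < \<infinity>" using Ffin unfolding pp_def .
    finally show ?thesis .
  qed
  then show "\<And>k. k \<in> {1..K} \<Longrightarrow> (\<integral>\<^sup>+ t \<in> I_k \<tau> k. ennreal (Fm t powr pp) \<partial>lebesgue) = ennreal (phi \<tau> k)"
    unfolding phi_def by (simp add: less_top)
  show "\<And>k. 0 \<le> phi \<tau> k" unfolding phi_def by simp
  show "(\<Sum>k\<in>{1..K}. phi \<tau> k) = Ftot"
    unfolding phi_def Ftot_def sum[symmetric]
    using enn2real_sum[of "{1..K}" "\<lambda>k. \<integral>\<^sup>+ t \<in> I_k \<tau> k. ennreal (Fm t powr pp) \<partial>lebesgue"] fin
    by (simp add: o_def)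
qed

lemma cont_apply: "continuous_on UNIV (\<lambda>\<Phi>::'x \<Rightarrow>\<^sub>L real. blinfun_apply \<Phi> x)"
  by (intro linear_continuous_on blinfun.bounded_linear_left)

lemma E1:
  assumes tau: "0 < \<tau>" "\<tau> = T / real K" and k: "1 \<le> k" "k \<le> K"
  shows "avg_A \<tau> k A x x \<ge> c0 * norm x powr p - c1 * (norm (j x))\<^sup>2 - c2"
proof -
  obtain a where a: "a \<in> borel_measurable lebesgue"
    "AE t in lebesgue. t \<in> {0<..<T} \<longrightarrow> blinfun_apply (A t x) x = a t"
    using meas_version[OF A2[of x] cont_apply[of x]] by blast
  define c where "c = c0 * norm x powr p - c1 * (norm (j x))\<^sup>2 - c2"
  define L where "L = lam * norm x powr p + \<gamma> * (1 + norm (j x) powr q + norm (j x) powr q + norm x powr p)"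
  have aeI: "AE t in lebesgue. t \<in> I_k \<tau> k \<longrightarrow> t \<in> {0<..<T}" by (rule AE_Ik[OF tau k])
  have "c * \<tau> \<le> (LINT t : I_k \<tau> k | lebesgue. blinfun_apply (A t x) x)"
  proof (rule set_int_lower[OF Ik_sets Ik_measure[OF tau(1)] _ a(1)])
    show "0 \<le> \<tau>" using tau by simp
    show "AE t in lebesgue. t \<in> I_k \<tau> k \<longrightarrow> blinfun_apply (A t x) x = a t"
      using aeI a(2) by eventually_elim blast
    show "AE t in lebesgue. t \<in> I_k \<tau> k \<longrightarrow> \<bar>blinfun_apply (A t x) x\<bar> \<le> L"
      using aeI A4 unfolding L_def by eventually_elim blast
    show "AE t in lebesgue. t \<in> I_k \<tau> k \<longrightarrow> c \<le> blinfun_apply (A t x) x"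
      using aeI A3 unfolding c_def by eventually_elim blast
  qed
  then have "c \<le> (1 / \<tau>) * (LINT t : I_k \<tau> k | lebesgue. blinfun_apply (A t x) x)"
    using tau(1) by (simp add: pos_le_divide_eq mult.commute)
  then show ?thesis unfolding avg_A_def c_def .
qed

lemma E2:
  assumes tau: "0 < \<tau>" "\<tau> = T / real K" and k: "1 \<le> k" "k \<le> K"
  shows "avg_f \<tau> k f x \<le> (c0 / 2) * norm x powr p + Cf * phi \<tau> k / \<tau>"
proof -
  define e where "e = (c0 / 2) powr (1 / p)"
  have e: "0 < e" "e powr p = c0 / 2" "e powr (- pp) = Cf"
    using cst(1) pq(1) unfolding e_def Cf_def by (simp_all add: powr_powr)
  have aeI: "AE t in lebesgue. t \<in> I_k \<tau> k \<longrightarrow> t \<in> {0<..<T}" by (rule AE_Ik[OF tau k])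
  have "\<bar>LINT t : I_k \<tau> k | lebesgue. blinfun_apply (f t) x\<bar> \<le> ((c0 / 2) * norm x powr p) * \<tau> + Cf * phi \<tau> k"
  proof (rule set_int_bound2[OF Ik_sets Ik_measure[OF tau(1)]])
    show "0 \<le> \<tau>" using tau by simp
    show "(\<lambda>t. Fm t powr pp) \<in> borel_measurable lebesgue" using Fm(1) by measurable
    show "\<And>t. 0 \<le> Fm t powr pp" by simp
    show "0 \<le> (c0 / 2) * norm x powr p" using cst by simp
    show "0 \<le> Cf" unfolding Cf_def by simp
    show "(\<integral>\<^sup>+ t \<in> I_k \<tau> k. ennreal (Fm t powr pp) \<partial>lebesgue) = ennreal (phi \<tau> k)"
      using phi_props(1)[OF tau] k by simp
    show "0 \<le> phi \<tau> k" by (rule phi_props(2)[OF tau])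
    show "AE t in lebesgue. t \<in> I_k \<tau> k \<longrightarrow> \<bar>blinfun_apply (f t) x\<bar> \<le> (c0 / 2) * norm x powr p + Cf * Fm t powr pp"
      using aeI Fm(3)
    proof eventually_elim
      case (elim t)
      show ?case
      proof
        assume "t \<in> I_k \<tau> k"
        then have nf: "norm (f t) = Fm t" using elim by blast
        have "\<bar>blinfun_apply (f t) x\<bar> \<le> norm (f t) * norm x"
          using norm_blinfun[of "f t" x] by simp
        also have "\<dots> = norm x * Fm t" using nf by simp
        also have "\<dots> \<le> e powr p * norm x powr p + e powr (- (p / (p - 1))) * Fm t powr (p / (p - 1))"
          by (rule young_eps[OF norm_ge_zero Fm(2) pq(1) e(1)])
        also have "\<dots> = (c0 / 2) * norm x powr p + Cf * Fm t powr pp"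
          using e unfolding pp_def by simp
        finally show "\<bar>blinfun_apply (f t) x\<bar> \<le> (c0 / 2) * norm x powr p + Cf * Fm t powr pp" .
      qed
    qed
  qed
  then have "(LINT t : I_k \<tau> k | lebesgue. blinfun_apply (f t) x) \<le> ((c0 / 2) * norm x powr p) * \<tau> + Cf * phi \<tau> k"
    by (rule abs_le_D1)
  then have "(1 / \<tau>) * (LINT t : I_k \<tau> k | lebesgue. blinfun_apply (f t) x) \<le> (1 / \<tau>) * (((c0 / 2) * norm x powr p) * \<tau> + Cf * phi \<tau> k)"
    using tau(1) by (intro mult_left_mono) auto
  also have "\<dots> = (c0 / 2) * norm x powr p + Cf * phi \<tau> k / \<tau>"
    using tau(1) by (simp add: field_simps)
  finally show ?thesis unfolding avg_f_def .
qed

lemma E3: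
  assumes tau: "0 < \<tau>" "\<tau> = T / real K"
    and rg: "RG_solution j A f (Vn n) \<tau> K (x0n n) xs" and k: "1 \<le> k" "k \<le> K"
  shows "(norm (j (xs k)))\<^sup>2 * (1 - 2 * c1 * \<tau>) + c0 * \<tau> * norm (xs k) powr p
     \<le> (norm (j (xs (k - 1))))\<^sup>2 + (2 * c2 * \<tau> + 2 * Cf * phi \<tau> k)"
proof -
  define u where "u = j (xs k)"
  define w where "w = j (xs (k - 1))"
  define D where "D = inner (u - w) u"
  define P where "P = norm (xs k) powr p"
  define e where "e = (norm u)\<^sup>2"
  define e' where "e' = (norm w)\<^sup>2"
  define aA where "aA = avg_A \<tau> k A (xs k) (xs k)"
  define aF where "aF = avg_f \<tau> k f (xs k)"
  have xk: "xs k \<in> Vn n" using rg k unfolding RG_solution_def by auto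
  have eq: "inner ((1 / \<tau>) *\<^sub>R (u - w)) (j (xs k)) + aA = aF"
    using rg k xk unfolding RG_solution_def u_def w_def aA_def aF_def by auto
  then have "(1 / \<tau>) * D + aA = aF" unfolding D_def u_def by simp
  then have D: "D = \<tau> * (aF - aA)" using tau(1) by (simp add: field_simps)
  have Dl: "D \<ge> (e - e') / 2" unfolding D_def e_def e'_def by (rule inner_lower)
  have E1': "aA \<ge> c0 * P - c1 * e - c2" unfolding aA_def P_def e_def u_def by (rule E1[OF tau k])
  have E2': "aF \<le> (c0 / 2) * P + Cf * phi \<tau> k / \<tau>" unfolding aF_def P_def by (rule E2[OF tau k])
  have "aF - aA \<le> (c0 / 2) * P + Cf * phi \<tau> k / \<tau> - (c0 * P - c1 * e - c2)" using E1' E2' by linarith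
  then have "\<tau> * (aF - aA) \<le> \<tau> * ((c0 / 2) * P + Cf * phi \<tau> k / \<tau> - (c0 * P - c1 * e - c2))"
    using tau(1) by (intro mult_left_mono) auto
  also have "\<dots> = \<tau> * c1 * e + \<tau> * c2 - (c0 / 2) * \<tau> * P + Cf * phi \<tau> k"
    using tau(1) by (simp add: field_simps)
  finally have X: "D \<le> \<tau> * c1 * e + \<tau> * c2 - (c0 / 2) * \<tau> * P + Cf * phi \<tau> k"
    using D by simp
  have "e - e' \<le> 2 * (\<tau> * c1 * e + \<tau> * c2 - (c0 / 2) * \<tau> * P + Cf * phi \<tau> k)"
    using order_trans[OF Dl X] by simp
  then show ?thesis unfolding e_def e'_def P_def u_def w_def by (simp add: algebra_simps)
qed

definition "Gc = 2 * c2 * T + 2 * Cf * Ftot"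
definition "Rc = exp (4 * c1 * T) * ((norm x0)\<^sup>2 + Gc)"
definition "Sx = (Rc + 2 * c1 * T * Rc + Gc) / c0"

lemma Ftot_nn: "0 \<le> Ftot" unfolding Ftot_def by simp
lemma Cf_nn: "0 \<le> Cf" unfolding Cf_def by simp
lemma Gc_nn: "0 \<le> Gc" unfolding Gc_def using cst Ftot_nn Cf_nn T by simp

lemma energy:
  assumes tau: "0 < \<tau>" "\<tau> = T / real K" and small: "4 * c1 * \<tau> < 1"
    and rg: "RG_solution j A f (Vn n) \<tau> K (x0n n) xs"
  shows "\<And>k. k \<le> K \<Longrightarrow> (norm (j (xs k)))\<^sup>2 \<le> Rc"
    and "(\<Sum>k\<in>{1..K}. \<tau> * norm (xs k) powr p) \<le> Sx"
proof -
  define e where "e k = (norm (j (xs k)))\<^sup>2" for k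
  define g where "g k = 2 * c2 * \<tau> + 2 * Cf * phi \<tau> k" for k
  define b where "b = 1 + 4 * c1 * \<tau>"
  have K0: "real K > 0" using tau by (cases "K = 0") auto
  have TK: "\<tau> * real K = T" using tau(2) K0 by simp
  have g0: "0 \<le> g k" for k unfolding g_def using cst(3) tau(1) Cf_nn phi_props(2)[OF tau, of k] by (intro add_nonneg_nonneg mult_nonneg_nonneg) auto
  have b1: "1 \<le> b" unfolding b_def using cst tau(1) by simp
  have E3': "e k * (1 - 2 * c1 * \<tau>) + c0 * \<tau> * norm (xs k) powr p \<le> e (k - 1) + g k"
    if "1 \<le> k" "k \<le> K" for k
    unfolding e_def g_def by (rule E3[OF tau rg that])
  have step: "e k \<le> b * (e (k - 1) + g k)" if k: "1 \<le> k" "k \<le> K" for k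
  proof -
    define a where "a = 2 * c1 * \<tau>"
    have a: "0 \<le> a" "a \<le> 1 / 2" using cst tau(1) small unfolding a_def by simp_all
    have ek: "0 \<le> e k" unfolding e_def by simp
    have "c0 * \<tau> * norm (xs k) powr p \<ge> 0" using cst tau(1) by simp
    then have h: "e k * (1 - a) \<le> e (k - 1) + g k" using E3'[OF k] unfolding a_def by linarith
    have ba: "b = 1 + 2 * a" unfolding a_def b_def by simp
    have "1 \<le> (1 + 2 * a) * (1 - a)"
    proof -
      have "a * (1 - 2 * a) \<ge> 0" using a by simp
      then show ?thesis by (simp add: algebra_simps)
    qed
    then have "e k \<le> e k * ((1 + 2 * a) * (1 - a))" using ek by (metis mult_left_mono mult.right_neutral)
    also have "\<dots> = (1 + 2 * a) * (e k * (1 - a))" by (simp add: algebra_simps)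
    also have "\<dots> \<le> (1 + 2 * a) * (e (k - 1) + g k)" using h a by (intro mult_left_mono) auto
    finally show ?thesis unfolding ba .
  qed
  have bK: "b ^ k \<le> exp (4 * c1 * T)" if "k \<le> K" for k
  proof -
    have "b ^ k \<le> exp (4 * c1 * \<tau>) ^ k" unfolding b_def using cst tau(1)
      by (intro power_mono) (simp_all add: add.commute)
    also have "\<dots> = exp (4 * c1 * \<tau> * real k)" by (simp add: exp_of_nat2_mult)
    also have "\<dots> \<le> exp (4 * c1 * T)"
    proof -
      have "\<tau> * real k \<le> \<tau> * real K" using that tau by (intro mult_left_mono) auto
      then have "4 * c1 * (\<tau> * real k) \<le> 4 * c1 * T" using TK cst by (intro mult_left_mono) auto
      then show ?thesis by (simp add: mult.assoc)
    qed
    finally show ?thesis .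
  qed
  have sumg: "(\<Sum>i\<in>{1..K}. g i) = Gc"
  proof -
    have "(\<Sum>i\<in>{1..K}. g i) = real K * (2 * c2 * \<tau>) + 2 * Cf * (\<Sum>i\<in>{1..K}. phi \<tau> i)"
      unfolding g_def by (simp add: sum.distrib sum_distrib_left)
    also have "\<dots> = Gc" unfolding phi_props(3)[OF tau] Gc_def using TK by (simp add: algebra_simps)
    finally show ?thesis .
  qed
  have e0: "e 0 \<le> (norm x0)\<^sup>2"
    using rg x0n_bd[of n] unfolding e_def RG_solution_def by (simp add: power_mono)
  show eR: "(norm (j (xs k)))\<^sup>2 \<le> Rc" if k: "k \<le> K" for k
  proof -
    have "e k \<le> b ^ k * (e 0 + (\<Sum>i\<in>{1..k}. g i))" by (rule gron[where e=e and g=g and b=b and K=K, OF b1 g0 step k])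
    also have "\<dots> \<le> exp (4 * c1 * T) * ((norm x0)\<^sup>2 + Gc)"
    proof (rule mult_mono)
      show "b ^ k \<le> exp (4 * c1 * T)" by (rule bK[OF k])
      have "(\<Sum>i\<in>{1..k}. g i) \<le> (\<Sum>i\<in>{1..K}. g i)" using k g0 by (intro sum_mono2) auto
      then show "e 0 + (\<Sum>i\<in>{1..k}. g i) \<le> (norm x0)\<^sup>2 + Gc" using e0 sumg by simp
      show "0 \<le> e 0 + (\<Sum>i\<in>{1..k}. g i)" unfolding e_def using g0 by (simp add: sum_nonneg)
    qed simp
    finally show ?thesis unfolding e_def Rc_def .
  qed
  have "c0 * \<tau> * norm (xs k) powr p \<le> e (k - 1) - e k + 2 * c1 * \<tau> * Rc + g k"
    if k: "1 \<le> k" "k \<le> K" for k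
  proof -
    have "e k \<le> Rc" using eR k unfolding e_def by simp
    then have "e k * (2 * c1 * \<tau>) \<le> Rc * (2 * c1 * \<tau>)" using cst tau(1) by (intro mult_right_mono) auto
    then show ?thesis using E3'[OF k] by (simp add: algebra_simps)
  qed
  then have "(\<Sum>k\<in>{1..K}. c0 * (\<tau> * norm (xs k) powr p)) \<le> (\<Sum>k\<in>{1..K}. (e (k - 1) - e k) + (2 * c1 * \<tau> * Rc + g k))"
    by (intro sum_mono) (simp add: algebra_simps)
  also have "\<dots> = e 0 - e K + real K * (2 * c1 * \<tau> * Rc) + Gc"
    by (simp only: sum.distrib telesc sumg sum_constant card_atLeastAtMost) (simp add: algebra_simps)
  also have "\<dots> \<le> Rc + 2 * c1 * T * Rc + Gc"
  proof -
    have "e 0 \<le> Rc" using eR[of 0] unfolding e_def by simp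
    moreover have "e K \<ge> 0" unfolding e_def by simp
    moreover have "real K * (2 * c1 * \<tau> * Rc) = 2 * c1 * T * Rc" using TK by (simp add: algebra_simps)
    ultimately show ?thesis by linarith
  qed
  finally have "c0 * (\<Sum>k\<in>{1..K}. \<tau> * norm (xs k) powr p) \<le> Rc + 2 * c1 * T * Rc + Gc"
    by (simp add: sum_distrib_left)
  then show "(\<Sum>k\<in>{1..K}. \<tau> * norm (xs k) powr p) \<le> Sx"
    unfolding Sx_def using cst(1) by (simp add: pos_le_divide_eq mult.commute)
qed

end


lemma nn_add_scaled:
  fixes H1 H2 :: "real \<Rightarrow> real"
  assumes S[measurable]: "S \<in> sets lebesgue"
    and H[measurable]: "H1 \<in> borel_measurable lebesgue" "H2 \<in> borel_measurable lebesgue"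
    and H0: "\<And>t. 0 \<le> H1 t" "\<And>t. 0 \<le> H2 t"
    and I1: "(\<integral>\<^sup>+ t \<in> S. ennreal (H1 t) \<partial>lebesgue) = ennreal h1"
    and I2: "(\<integral>\<^sup>+ t \<in> S. ennreal (H2 t) \<partial>lebesgue) = ennreal h2"
    and nn: "0 \<le> a" "0 \<le> b" "0 \<le> h1" "0 \<le> h2"
  shows "(\<integral>\<^sup>+ t \<in> S. ennreal (a * H1 t + b * H2 t) \<partial>lebesgue) = ennreal (a * h1 + b * h2)"
proof -
  have "(\<integral>\<^sup>+ t \<in> S. ennreal (a * H1 t + b * H2 t) \<partial>lebesgue)
      = (\<integral>\<^sup>+ t. ennreal a * (ennreal (H1 t) * indicator S t) + ennreal b * (ennreal (H2 t) * indicator S t) \<partial>lebesgue)"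
  proof (rule nn_integral_cong)
    fix t
    have "ennreal (a * H1 t + b * H2 t) = ennreal a * ennreal (H1 t) + ennreal b * ennreal (H2 t)"
      using nn H0[of t] by (simp add: ennreal_plus ennreal_mult)
    then show "ennreal (a * H1 t + b * H2 t) * indicator S t = ennreal a * (ennreal (H1 t) * indicator S t) + ennreal b * (ennreal (H2 t) * indicator S t)"
      by (simp add: distrib_right mult.assoc)
  qed
  also have "\<dots> = (\<integral>\<^sup>+ t. ennreal a * (ennreal (H1 t) * indicator S t) \<partial>lebesgue) + (\<integral>\<^sup>+ t. ennreal b * (ennreal (H2 t) * indicator S t) \<partial>lebesgue)"
    by (rule nn_integral_add) measurable
  also have "\<dots> = ennreal a * ennreal h1 + ennreal b * ennreal h2"
    using I1 I2 by (simp add: nn_integral_cmult)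
  also have "\<dots> = ennreal (a * h1 + b * h2)" using nn by (simp add: ennreal_plus ennreal_mult)
  finally show ?thesis .
qed

lemma meas_version_nn:
  fixes u :: "real \<Rightarrow> 'a::real_normed_vector"
  assumes bm: "bochner_measurable T u"
  shows "\<exists>G. G \<in> borel_measurable lebesgue \<and> (\<forall>t. 0 \<le> G t) \<and> (AE t in lebesgue. t \<in> {0<..<T} \<longrightarrow> norm (u t) = G t)"
proof -
  have c: "continuous_on UNIV (norm :: 'a \<Rightarrow> real)" by (intro continuous_intros)
  obtain G where G: "G \<in> borel_measurable lebesgue" "AE t in lebesgue. t \<in> {0<..<T} \<longrightarrow> norm (u t) = G t"
    using meas_version[OF bm c] by blast
  have "(\<lambda>t. \<bar>G t\<bar>) \<in> borel_measurable lebesgue" using G(1) by measurable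
  moreover have "AE t in lebesgue. t \<in> {0<..<T} \<longrightarrow> norm (u t) = \<bar>G t\<bar>"
  proof (rule AE_mp[OF G(2)], rule AE_I2, intro impI)
    fix t assume "t \<in> {0<..<T} \<longrightarrow> norm (u t) = G t" "t \<in> {0<..<T}"
    then have "norm (u t) = G t" by blast
    then show "norm (u t) = \<bar>G t\<bar>" by (metis abs_norm_cancel)
  qed
  ultimately show ?thesis by (intro exI[of _ "\<lambda>t. \<bar>G t\<bar>"]) auto
qed

context data begin

lemma Rc_nn: "0 \<le> Rc" unfolding Rc_def using Gc_nn by simp

lemma xbar_step: "xbar \<tau> xs t = xs (nat \<lceil>t / \<tau>\<rceil>)" unfolding xbar_def ..

lemma claim1:
  assumes tau: "0 < \<tau>" "\<tau> = T / real K" and small: "4 * c1 * \<tau> < 1"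
    and rg: "RG_solution j A f (Vn n) \<tau> K (x0n n) xs"
  shows "LpLinf_norm p T j (xbar \<tau> xs) \<le> Sx powr (1 / p) + sqrt Rc"
    and "Lp_int p T (xbar \<tau> xs) = ennreal (\<Sum>k\<in>{1..K}. \<tau> * norm (xs k) powr p)"
    and "Linf_norm T (\<lambda>t. j (xbar \<tau> xs t)) \<le> sqrt Rc"
proof -
  have eR: "\<And>k. k \<le> K \<Longrightarrow> norm (j (xs k)) \<le> sqrt Rc"
    using energy(1)[OF tau small rg] by (simp add: real_le_rsqrt)
  show LI: "Lp_int p T (xbar \<tau> xs) = ennreal (\<Sum>k\<in>{1..K}. \<tau> * norm (xs k) powr p)"
  proof -
    have "Lp_int p T (xbar \<tau> xs) = (\<integral>\<^sup>+ t \<in> {0<..<T}. (\<lambda>k. ennreal (norm (xs k) powr p)) (nat \<lceil>t / \<tau>\<rceil>) \<partial>lebesgue)"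
      unfolding Lp_int_def xbar_step ..
    also have "\<dots> = (\<Sum>k\<in>{1..K}. ennreal \<tau> * ennreal (norm (xs k) powr p))"
      by (rule step_int[OF tau])
    also have "\<dots> = ennreal (\<Sum>k\<in>{1..K}. \<tau> * norm (xs k) powr p)"
      using tau(1) by (simp add: ennreal_mult[symmetric])
    finally show ?thesis .
  qed
  have Lp: "Lp_norm p T (xbar \<tau> xs) \<le> Sx powr (1 / p)"
  proof -
    have nn: "0 \<le> (\<Sum>k\<in>{1..K}. \<tau> * norm (xs k) powr p)" using tau(1) by (simp add: sum_nonneg)
    have "Lp_norm p T (xbar \<tau> xs) = (\<Sum>k\<in>{1..K}. \<tau> * norm (xs k) powr p) powr (1 / p)"
      unfolding Lp_norm_def LI using nn by simp
    also have "\<dots> \<le> Sx powr (1 / p)"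
      using energy(2)[OF tau small rg] nn pq by (intro powr_mono2) auto
    finally show ?thesis .
  qed
  show Li: "Linf_norm T (\<lambda>t. j (xbar \<tau> xs t)) \<le> sqrt Rc"
    unfolding Linf_norm_def
  proof (rule cInf_lower)
    show "bdd_below {C. 0 \<le> C \<and> (AE t in lebesgue. t \<in> {0<..<T} \<longrightarrow> norm (j (xbar \<tau> xs t)) \<le> C)}"
      by (rule bdd_belowI[where m=0]) simp
    have "0 \<le> Rc" by (rule Rc_nn)
    moreover have "AE t in lebesgue. t \<in> {0<..<T} \<longrightarrow> norm (j (xbar \<tau> xs t)) \<le> sqrt Rc"
    proof (rule AE_I2, intro impI)
      fix t assume "t \<in> {0<..<T}"
      then have "nat \<lceil>t / \<tau>\<rceil> \<le> K" using ceil_range[OF tau] by blast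
      then show "norm (j (xbar \<tau> xs t)) \<le> sqrt Rc" unfolding xbar_step by (rule eR)
    qed
    ultimately show "sqrt Rc \<in> {C. 0 \<le> C \<and> (AE t in lebesgue. t \<in> {0<..<T} \<longrightarrow> norm (j (xbar \<tau> xs t)) \<le> C)}"
      by simp
  qed
  show "LpLinf_norm p T j (xbar \<tau> xs) \<le> Sx powr (1 / p) + sqrt Rc"
    unfolding LpLinf_norm_def using Lp Li by simp
qed

lemma ceil_bounds:
  assumes tau: "0 < \<tau>" "\<tau> = T / real K" and t: "t \<in> {0<..<T}"
  shows "real (nat \<lceil>t / \<tau>\<rceil>) - 1 < t / \<tau>" "t / \<tau> \<le> real (nat \<lceil>t / \<tau>\<rceil>)"
    "1 \<le> nat \<lceil>t / \<tau>\<rceil>" "nat \<lceil>t / \<tau>\<rceil> \<le> K"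
proof -
  have r: "1 \<le> nat \<lceil>t / \<tau>\<rceil> \<and> nat \<lceil>t / \<tau>\<rceil> \<le> K" by (rule ceil_range[OF tau t])
  have "0 < t / \<tau>" using tau(1) t by simp
  then have z: "0 \<le> \<lceil>t / \<tau>\<rceil>" by simp
  have e: "real (nat \<lceil>t / \<tau>\<rceil>) = of_int \<lceil>t / \<tau>\<rceil>" using z by simp
  show "real (nat \<lceil>t / \<tau>\<rceil>) - 1 < t / \<tau>" unfolding e by linarith
  show "t / \<tau> \<le> real (nat \<lceil>t / \<tau>\<rceil>)" unfolding e by linarith
  show "1 \<le> nat \<lceil>t / \<tau>\<rceil>" "nat \<lceil>t / \<tau>\<rceil> \<le> K" using r by auto
qed

lemma xhat_eq: "xhat \<tau> xs t = (t / \<tau> - (real (nat \<lceil>t / \<tau>\<rceil>) - 1)) *\<^sub>R xs (nat \<lceil>t / \<tau>\<rceil>)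
    + (real (nat \<lceil>t / \<tau>\<rceil>) - t / \<tau>) *\<^sub>R xs (nat \<lceil>t / \<tau>\<rceil> - 1)"
  unfolding xhat_def Let_def ..

lemma claim2:
  assumes tau: "0 < \<tau>" "\<tau> = T / real K" and small: "4 * c1 * \<tau> < 1"
    and rg: "RG_solution j A f (Vn n) \<tau> K (x0n n) xs"
  shows "Linf_norm T (\<lambda>t. j (xhat \<tau> xs t)) \<le> sqrt Rc"
  unfolding Linf_norm_def
proof (rule cInf_lower)
  show "bdd_below {C. 0 \<le> C \<and> (AE t in lebesgue. t \<in> {0<..<T} \<longrightarrow> norm (j (xhat \<tau> xs t)) \<le> C)}"
    by (rule bdd_belowI[where m=0]) simp
  have eR: "\<And>k. k \<le> K \<Longrightarrow> norm (j (xs k)) \<le> sqrt Rc"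
    using energy(1)[OF tau small rg] by (simp add: real_le_rsqrt)
  have lin: "linear j" using j_lin by (rule bounded_linear.linear)
  have "AE t in lebesgue. t \<in> {0<..<T} \<longrightarrow> norm (j (xhat \<tau> xs t)) \<le> sqrt Rc"
  proof (rule AE_I2, intro impI)
    fix t assume t: "t \<in> {0<..<T}"
    define k where "k = nat \<lceil>t / \<tau>\<rceil>"
    define a where "a = t / \<tau> - (real k - 1)"
    define b where "b = real k - t / \<tau>"
    have cb: "real k - 1 < t / \<tau>" "t / \<tau> \<le> real k" "1 \<le> k" "k \<le> K"
      using ceil_bounds[OF tau t] unfolding k_def by auto
    have ab: "0 \<le> a" "0 \<le> b" "a + b = 1" using cb unfolding a_def b_def by auto
    have "j (xhat \<tau> xs t) = a *\<^sub>R j (xs k) + b *\<^sub>R j (xs (k - 1))"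
      unfolding xhat_eq a_def b_def k_def by (simp add: linear_add[OF lin] linear_scale[OF lin])
    then have "norm (j (xhat \<tau> xs t)) \<le> a * norm (j (xs k)) + b * norm (j (xs (k - 1)))"
      using ab by (metis (no_types, opaque_lifting) norm_scaleR norm_triangle_ineq abs_of_nonneg)
    also have "\<dots> \<le> a * sqrt Rc + b * sqrt Rc"
      using ab cb eR[of k] eR[of "k - 1"] by (intro add_mono mult_left_mono) auto
    also have "\<dots> = sqrt Rc" using ab by (simp add: algebra_simps flip: distrib_right)
    finally show "norm (j (xhat \<tau> xs t)) \<le> sqrt Rc" .
  qed
  then show "sqrt Rc \<in> {C. 0 \<le> C \<and> (AE t in lebesgue. t \<in> {0<..<T} \<longrightarrow> norm (j (xhat \<tau> xs t)) \<le> C)}"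
    using Rc_nn by simp
qed

end

lemma Lp_repr:
  fixes u :: "real \<Rightarrow> 'a::real_normed_vector"
  assumes u: "u \<in> Lp r T"
  shows "\<exists>G. G \<in> borel_measurable lebesgue \<and> (\<forall>t. 0 \<le> G t) \<and> (AE t in lebesgue. t \<in> {0<..<T} \<longrightarrow> norm (u t) = G t)
     \<and> (\<integral>\<^sup>+ t \<in> {0<..<T}. ennreal (G t powr r) \<partial>lebesgue) = ennreal (enn2real (Lp_int r T u))"
proof -
  obtain G where G: "G \<in> borel_measurable lebesgue" "\<forall>t. 0 \<le> G t" "AE t in lebesgue. t \<in> {0<..<T} \<longrightarrow> norm (u t) = G t"
    using meas_version_nn[of T u] u unfolding Lp_def by blast
  have "Lp_int r T u = (\<integral>\<^sup>+ t \<in> {0<..<T}. ennreal (G t powr r) \<partial>lebesgue)"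
    unfolding Lp_int_def
  proof (rule nn_integral_cong_AE)
    show "AE t in lebesgue. ennreal (norm (u t) powr r) * indicator {0<..<T} t = ennreal (G t powr r) * indicator {0<..<T} t"
    proof (rule AE_mp[OF G(3)], rule AE_I2, intro impI)
      fix t assume "t \<in> {0<..<T} \<longrightarrow> norm (u t) = G t"
      then show "ennreal (norm (u t) powr r) * indicator {0<..<T} t = ennreal (G t powr r) * indicator {0<..<T} t"
        by (cases "t \<in> {0<..<T}") simp_all
    qed
  qed
  moreover have "Lp_int r T u < \<infinity>" using u unfolding Lp_def by simp
  ultimately have "(\<integral>\<^sup>+ t \<in> {0<..<T}. ennreal (G t powr r) \<partial>lebesgue) = ennreal (enn2real (Lp_int r T u))"
    by (simp add: less_top)
  then show ?thesis using G by blast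
qed

lemma pw_lemma:
  fixes D Q r :: real
  assumes D: "0 < D" and Q: "0 \<le> Q" and QD: "Q powr (1 / r) \<le> D" and r: "1 < r"
  shows "(1 / D) powr (r - 1) * Q \<le> D"
proof -
  have "Q = (Q powr (1 / r)) powr r" using Q r by (simp add: powr_powr)
  also have "\<dots> \<le> D powr r" using QD r by (intro powr_mono2) auto
  finally have "(1 / D) powr (r - 1) * Q \<le> (1 / D) powr (r - 1) * D powr r"
    by (intro mult_left_mono) auto
  also have "(1 / D) powr (r - 1) * D powr r = D powr r / D powr (r - 1)"
    using D by (simp add: powr_divide)
  also have "\<dots> = D" using D by (simp add: powr_diff[symmetric])
  finally show ?thesis .
qed

context data begin

definition "M3 = lam * Sx + \<gamma> * (T + T * sqrt Rc powr q) + 2 * \<gamma>"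

lemma s_bound_pt:
  fixes s :: real and x yy :: 'x and t :: real
  assumes s: "0 < s"
    and A4t: "\<forall>x y. \<bar>blinfun_apply (A t x) y\<bar> \<le> lam * norm x powr p
                  + \<gamma> * (1 + norm (j x) powr q + norm (j y) powr q + norm y powr p)"
  shows "\<bar>blinfun_apply (A t x) yy\<bar> \<le> (1 / s) * (lam * norm x powr p + \<gamma> * norm (j x) powr q + \<gamma> * 1)
      + 1 * ((\<gamma> * s powr (q - 1)) * norm (j yy) powr q + (\<gamma> * s powr (p - 1)) * norm yy powr p)"
proof -
  have lin: "linear j" using j_lin by (rule bounded_linear.linear)
  have "\<bar>blinfun_apply (A t x) (s *\<^sub>R yy)\<bar> \<le> lam * norm x powr p
      + \<gamma> * (1 + norm (j x) powr q + norm (j (s *\<^sub>R yy)) powr q + norm (s *\<^sub>R yy) powr p)"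
    using A4t by blast
  moreover have "\<bar>blinfun_apply (A t x) (s *\<^sub>R yy)\<bar> = s * \<bar>blinfun_apply (A t x) yy\<bar>"
    using s by (simp add: blinfun.scaleR_right abs_mult)
  moreover have "norm (j (s *\<^sub>R yy)) powr q = s powr q * norm (j yy) powr q"
    using s by (simp add: linear_scale[OF lin] powr_mult)
  moreover have "norm (s *\<^sub>R yy) powr p = s powr p * norm yy powr p"
    using s by (simp add: powr_mult)
  ultimately have h: "s * \<bar>blinfun_apply (A t x) yy\<bar> \<le> lam * norm x powr p
      + \<gamma> * (1 + norm (j x) powr q + s powr q * norm (j yy) powr q + s powr p * norm yy powr p)" by simp
  have sq: "s powr q = s * s powr (q - 1)" "s powr p = s * s powr (p - 1)"
    using s by (simp_all add: powr_diff)
  have "\<bar>blinfun_apply (A t x) yy\<bar> \<le> (lam * norm x powr p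
      + \<gamma> * (1 + norm (j x) powr q + s powr q * norm (j yy) powr q + s powr p * norm yy powr p)) / s"
    using h s by (simp add: pos_le_divide_eq mult.commute)
  also have "\<dots> = (1 / s) * (lam * norm x powr p + \<gamma> * norm (j x) powr q + \<gamma> * 1)
      + 1 * ((\<gamma> * s powr (q - 1)) * norm (j yy) powr q + (\<gamma> * s powr (p - 1)) * norm yy powr p)"
    unfolding sq using s by (simp add: field_simps)
  finally show ?thesis .
qed

lemma claim3:
  assumes tau: "0 < \<tau>" "\<tau> = T / real K" and small: "4 * c1 * \<tau> < 1"
    and rg: "RG_solution j A f (Vn n) \<tau> K (x0n n) xs"
    and y: "y \<in> LpLq p q T j"
  shows "\<bar>LINT t : {0<..<T} | lebesgue. blinfun_apply (A t (xbar \<tau> xs t)) (y t)\<bar> \<le> M3 * LpLq_norm p q T j y"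
proof -
  have y1: "y \<in> Lp p T" and y2: "(\<lambda>t. j (y t)) \<in> Lp q T" using y unfolding LpLq_def by auto
  obtain Y1 where Y1: "Y1 \<in> borel_measurable lebesgue" "\<forall>t. 0 \<le> Y1 t"
      "AE t in lebesgue. t \<in> {0<..<T} \<longrightarrow> norm (y t) = Y1 t"
      "(\<integral>\<^sup>+ t \<in> {0<..<T}. ennreal (Y1 t powr p) \<partial>lebesgue) = ennreal (enn2real (Lp_int p T y))"
    using Lp_repr[OF y1] by blast
  obtain Y2 where Y2: "Y2 \<in> borel_measurable lebesgue" "\<forall>t. 0 \<le> Y2 t"
      "AE t in lebesgue. t \<in> {0<..<T} \<longrightarrow> norm (j (y t)) = Y2 t"
      "(\<integral>\<^sup>+ t \<in> {0<..<T}. ennreal (Y2 t powr q) \<partial>lebesgue) = ennreal (enn2real (Lp_int q T (\<lambda>t. j (y t))))"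
    using Lp_repr[OF y2] by blast
  define Py where "Py = enn2real (Lp_int p T y)"
  define Qy where "Qy = enn2real (Lp_int q T (\<lambda>t. j (y t)))"
  define N where "N = LpLq_norm p q T j y"
  have N: "N = Py powr (1 / p) + Qy powr (1 / q)"
    unfolding N_def LpLq_norm_def Lp_norm_def Py_def Qy_def ..
  have PQ0: "0 \<le> Py" "0 \<le> Qy" unfolding Py_def Qy_def by simp_all
  define Pt where "Pt t = norm (xs (nat \<lceil>t / \<tau>\<rceil>)) powr p" for t
  define Jt where "Jt t = norm (j (xs (nat \<lceil>t / \<tau>\<rceil>))) powr q" for t
  define Px where "Px = (\<Sum>k\<in>{1..K}. \<tau> * norm (xs k) powr p)"
  define Qx where "Qx = (\<Sum>k\<in>{1..K}. \<tau> * norm (j (xs k)) powr q)"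
  have Pt_m: "Pt \<in> borel_measurable lebesgue" unfolding Pt_def by measurable
  have Jt_m: "Jt \<in> borel_measurable lebesgue" unfolding Jt_def by measurable
  have Px0: "0 \<le> Px" "0 \<le> Qx" unfolding Px_def Qx_def using tau(1) by (simp_all add: sum_nonneg)
  have IPt: "(\<integral>\<^sup>+ t \<in> {0<..<T}. ennreal (Pt t) \<partial>lebesgue) = ennreal Px"
  proof -
    have "(\<integral>\<^sup>+ t \<in> {0<..<T}. ennreal (Pt t) \<partial>lebesgue) = (\<integral>\<^sup>+ t \<in> {0<..<T}. (\<lambda>k. ennreal (norm (xs k) powr p)) (nat \<lceil>t / \<tau>\<rceil>) \<partial>lebesgue)"
      unfolding Pt_def ..
    also have "\<dots> = (\<Sum>k\<in>{1..K}. ennreal \<tau> * ennreal (norm (xs k) powr p))" by (rule step_int[OF tau])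
    also have "\<dots> = ennreal Px" unfolding Px_def using tau(1) by (simp add: ennreal_mult[symmetric])
    finally show ?thesis .
  qed
  have IJt: "(\<integral>\<^sup>+ t \<in> {0<..<T}. ennreal (Jt t) \<partial>lebesgue) = ennreal Qx"
  proof -
    have "(\<integral>\<^sup>+ t \<in> {0<..<T}. ennreal (Jt t) \<partial>lebesgue) = (\<integral>\<^sup>+ t \<in> {0<..<T}. (\<lambda>k. ennreal (norm (j (xs k)) powr q)) (nat \<lceil>t / \<tau>\<rceil>) \<partial>lebesgue)"
      unfolding Jt_def ..
    also have "\<dots> = (\<Sum>k\<in>{1..K}. ennreal \<tau> * ennreal (norm (j (xs k)) powr q))" by (rule step_int[OF tau])
    also have "\<dots> = ennreal Qx" unfolding Qx_def using tau(1) by (simp add: ennreal_mult[symmetric])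
    finally show ?thesis .
  qed
  have I1: "(\<integral>\<^sup>+ t \<in> {0<..<T}. ennreal 1 \<partial>lebesgue) = ennreal T"
    using T by simp
  have K0: "real K > 0" using tau by (cases "K = 0") auto
  have TK: "\<tau> * real K = T" using tau(2) K0 by simp
  have PxS: "Px \<le> Sx" unfolding Px_def by (rule energy(2)[OF tau small rg])
  have QxS: "Qx \<le> T * sqrt Rc powr q"
  proof -
    have "Qx \<le> (\<Sum>k\<in>{1..K}. \<tau> * sqrt Rc powr q)" unfolding Qx_def
    proof (rule sum_mono)
      fix k assume k: "k \<in> {1..K}"
      have "norm (j (xs k)) \<le> sqrt Rc" using energy(1)[OF tau small rg, of k] k by (simp add: real_le_rsqrt)
      then have "norm (j (xs k)) powr q \<le> sqrt Rc powr q" using pq by (intro powr_mono2) auto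
      then show "\<tau> * norm (j (xs k)) powr q \<le> \<tau> * sqrt Rc powr q" using tau(1) by (intro mult_left_mono) auto
    qed
    also have "\<dots> = T * sqrt Rc powr q" using TK by (simp add: algebra_simps)
    finally show ?thesis .
  qed
  define C where "C = 1 * (lam * Px + \<gamma> * Qx) + \<gamma> * T"
  have sb: "\<bar>LINT t : {0<..<T} | lebesgue. blinfun_apply (A t (xbar \<tau> xs t)) (y t)\<bar>
      \<le> (1 / s) * C + 1 * ((\<gamma> * s powr (q - 1)) * Qy + (\<gamma> * s powr (p - 1)) * Py)" if s: "0 < s" for s
  proof (rule set_int_bound)
    show "{0<..<T} \<in> sets lebesgue" by simp
    show "0 \<le> (1 / s) * C + 1 * ((\<gamma> * s powr (q - 1)) * Qy + (\<gamma> * s powr (p - 1)) * Py)"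
      unfolding C_def using s cst PQ0 Px0 T by simp
    define H where "H t = (1 / s) * (1 * (lam * Pt t + \<gamma> * Jt t) + \<gamma> * 1) + 1 * ((\<gamma> * s powr (q - 1)) * Y2 t powr q + (\<gamma> * s powr (p - 1)) * Y1 t powr p)" for t
    have Ia: "(\<integral>\<^sup>+ t \<in> {0<..<T}. ennreal (lam * Pt t + \<gamma> * Jt t) \<partial>lebesgue) = ennreal (lam * Px + \<gamma> * Qx)"
      by (rule nn_add_scaled[OF _ Pt_m Jt_m _ _ IPt IJt]) (use cst Px0 in \<open>simp_all add: Pt_def Jt_def\<close>)
    have Ib: "(\<integral>\<^sup>+ t \<in> {0<..<T}. ennreal (1 * (lam * Pt t + \<gamma> * Jt t) + \<gamma> * 1) \<partial>lebesgue) = ennreal (1 * (lam * Px + \<gamma> * Qx) + \<gamma> * T)"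
      by (rule nn_add_scaled[OF _ _ _ _ _ Ia I1]) (use cst Px0 Pt_m Jt_m T in \<open>simp_all add: Pt_def Jt_def\<close>)
    have Ic: "(\<integral>\<^sup>+ t \<in> {0<..<T}. ennreal ((\<gamma> * s powr (q - 1)) * Y2 t powr q + (\<gamma> * s powr (p - 1)) * Y1 t powr p) \<partial>lebesgue)
        = ennreal ((\<gamma> * s powr (q - 1)) * Qy + (\<gamma> * s powr (p - 1)) * Py)"
      by (rule nn_add_scaled[OF _ _ _ _ _ Y2(4)[folded Qy_def] Y1(4)[folded Py_def]]) (use cst PQ0 Y1 Y2 in \<open>simp_all\<close>)
    have Id: "(\<integral>\<^sup>+ t \<in> {0<..<T}. ennreal (H t) \<partial>lebesgue) = ennreal ((1 / s) * C + 1 * ((\<gamma> * s powr (q - 1)) * Qy + (\<gamma> * s powr (p - 1)) * Py))"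
      unfolding H_def C_def
    proof (rule nn_add_scaled[OF _ _ _ _ _ Ib Ic])
      show "(\<lambda>t. 1 * (lam * Pt t + \<gamma> * Jt t) + \<gamma> * 1) \<in> borel_measurable lebesgue" using Pt_m Jt_m by measurable
      show "(\<lambda>t. \<gamma> * s powr (q - 1) * Y2 t powr q + \<gamma> * s powr (p - 1) * Y1 t powr p) \<in> borel_measurable lebesgue"
        using Y1(1) Y2(1) by measurable
      show "0 \<le> 1 * (lam * Pt t + \<gamma> * Jt t) + \<gamma> * 1" for t using cst unfolding Pt_def Jt_def by simp
      show "0 \<le> \<gamma> * s powr (q - 1) * Y2 t powr q + \<gamma> * s powr (p - 1) * Y1 t powr p" for t using cst by simp
      show "0 \<le> 1 / s" using s by simp
      show "0 \<le> (1::real)" by simp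
      show "0 \<le> 1 * (lam * Px + \<gamma> * Qx) + \<gamma> * T" using cst Px0 T by simp
      show "0 \<le> \<gamma> * s powr (q - 1) * Qy + \<gamma> * s powr (p - 1) * Py" using cst PQ0 by simp
    qed simp
    have "(\<integral>\<^sup>+ t \<in> {0<..<T}. ennreal \<bar>blinfun_apply (A t (xbar \<tau> xs t)) (y t)\<bar> \<partial>lebesgue) \<le> (\<integral>\<^sup>+ t \<in> {0<..<T}. ennreal (H t) \<partial>lebesgue)"
    proof (rule nn_integral_mono_AE)
      show "AE t in lebesgue. ennreal \<bar>blinfun_apply (A t (xbar \<tau> xs t)) (y t)\<bar> * indicator {0<..<T} t \<le> ennreal (H t) * indicator {0<..<T} t"
        using A4 Y1(3) Y2(3)
      proof eventually_elim
        case (elim t)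
        show ?case
        proof (cases "t \<in> {0<..<T}")
          case True
          have A4t: "\<forall>x y. \<bar>blinfun_apply (A t x) y\<bar> \<le> lam * norm x powr p
                  + \<gamma> * (1 + norm (j x) powr q + norm (j y) powr q + norm y powr p)" using elim True by blast
          have "\<bar>blinfun_apply (A t (xbar \<tau> xs t)) (y t)\<bar> \<le> H t"
            using s_bound_pt[OF s A4t, of "xbar \<tau> xs t" "y t"] elim True
            unfolding H_def Pt_def Jt_def xbar_step by simp
          then show ?thesis using True by (simp add: ennreal_leI)
        qed simp
      qed
    qed
    then show "(\<integral>\<^sup>+ t \<in> {0<..<T}. ennreal \<bar>blinfun_apply (A t (xbar \<tau> xs t)) (y t)\<bar> \<partial>lebesgue)
        \<le> ennreal ((1 / s) * C + 1 * ((\<gamma> * s powr (q - 1)) * Qy + (\<gamma> * s powr (p - 1)) * Py))"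
      using Id by simp
  qed
  have N0: "0 \<le> N" unfolding N by simp
  have CM: "C + 2 * \<gamma> \<le> M3"
  proof -
    have "lam * Px \<le> lam * Sx" using PxS cst by (intro mult_left_mono) auto
    moreover have "\<gamma> * Qx \<le> \<gamma> * (T * sqrt Rc powr q)" using QxS cst by (intro mult_left_mono) auto
    ultimately show ?thesis unfolding C_def M3_def by (simp add: algebra_simps)
  qed
  have M30: "0 \<le> M3"
  proof -
    have "0 \<le> lam * Px" "0 \<le> \<gamma> * Qx" "0 \<le> \<gamma> * T" using cst Px0 T by simp_all
    then have "0 \<le> C" unfolding C_def by simp
    then show ?thesis using CM cst(4) by linarith
  qed
  have "\<bar>LINT t : {0<..<T} | lebesgue. blinfun_apply (A t (xbar \<tau> xs t)) (y t)\<bar> \<le> M3 * N"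
  proof (rule field_le_epsilon)
    fix e :: real assume e: "0 < e"
    define \<delta> where "\<delta> = e / (M3 + 1)"
    have d: "0 < \<delta>" unfolding \<delta>_def using e M30 by simp
    define D where "D = N + \<delta>"
    have D: "0 < D" unfolding D_def using N0 d by simp
    have s: "0 < 1 / D" using D by simp
    have q1: "(1 / D) powr (q - 1) * Qy \<le> D"
      by (rule pw_lemma[OF D PQ0(2) _]) (use N PQ0 d pq in \<open>simp_all add: D_def\<close>)
    have p1: "(1 / D) powr (p - 1) * Py \<le> D"
      by (rule pw_lemma[OF D PQ0(1) _]) (use N PQ0 d pq in \<open>simp_all add: D_def\<close>)
    have "\<bar>LINT t : {0<..<T} | lebesgue. blinfun_apply (A t (xbar \<tau> xs t)) (y t)\<bar>
        \<le> (1 / (1 / D)) * C + 1 * ((\<gamma> * (1 / D) powr (q - 1)) * Qy + (\<gamma> * (1 / D) powr (p - 1)) * Py)"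
      by (rule sb[OF s])
    also have "\<dots> \<le> D * C + (\<gamma> * D + \<gamma> * D)"
    proof -
      have "\<gamma> * ((1 / D) powr (q - 1) * Qy) \<le> \<gamma> * D" using q1 cst by (intro mult_left_mono) auto
      moreover have "\<gamma> * ((1 / D) powr (p - 1) * Py) \<le> \<gamma> * D" using p1 cst by (intro mult_left_mono) auto
      moreover have "(1 / (1 / D)) * C + 1 * ((\<gamma> * (1 / D) powr (q - 1)) * Qy + (\<gamma> * (1 / D) powr (p - 1)) * Py)
          = D * C + (\<gamma> * ((1 / D) powr (q - 1) * Qy) + \<gamma> * ((1 / D) powr (p - 1) * Py))"
        by (simp add: mult.assoc)
      ultimately show ?thesis by linarith
    qed
    also have "\<dots> = D * (C + 2 * \<gamma>)" by (simp add: algebra_simps)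
    also have "\<dots> \<le> D * M3" using CM D by (intro mult_left_mono) auto
    also have "\<dots> = M3 * N + M3 * \<delta>" unfolding D_def by (simp add: algebra_simps)
    also have "M3 * \<delta> \<le> e"
    proof -
      have "M3 * \<delta> = e * (M3 / (M3 + 1))" unfolding \<delta>_def by simp
      also have "\<dots> \<le> e * 1" using e M30 by (intro mult_left_mono) auto
      finally show ?thesis by simp
    qed
    finally show "\<bar>LINT t : {0<..<T} | lebesgue. blinfun_apply (A t (xbar \<tau> xs t)) (y t)\<bar> \<le> M3 * N + e" by simp
  qed
  then show ?thesis unfolding N_def .
qed

end

context data begin

definition "Rq = sqrt Rc powr q"
definition "c4 = 2 + \<gamma> + \<gamma> * Kj powr q"
definition "bk \<tau> xs k = phi \<tau> k / \<tau> + lam * norm (xs k) powr p + \<gamma> * (1 + Rq)"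

lemma fw_bound:
  assumes tau: "0 < \<tau>" "\<tau> = T / real K" and k: "1 \<le> k" "k \<le> K" and w: "norm w \<le> 1" and s: "0 < s"
  shows "\<bar>avg_f \<tau> k f w\<bar> \<le> s powr p / s + phi \<tau> k / (s * \<tau>)"
proof -
  have aeI: "AE t in lebesgue. t \<in> I_k \<tau> k \<longrightarrow> t \<in> {0<..<T}" by (rule AE_Ik[OF tau k])
  have "\<bar>LINT t : I_k \<tau> k | lebesgue. blinfun_apply (f t) w\<bar> \<le> (s powr p / s) * \<tau> + (1 / s) * phi \<tau> k"
  proof (rule set_int_bound2[OF Ik_sets Ik_measure[OF tau(1)]])
    show "0 \<le> \<tau>" using tau by simp
    show "(\<lambda>t. Fm t powr pp) \<in> borel_measurable lebesgue" using Fm(1) by measurable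
    show "\<And>t. 0 \<le> Fm t powr pp" by simp
    show "0 \<le> s powr p / s" using s by simp
    show "0 \<le> 1 / s" using s by simp
    show "(\<integral>\<^sup>+ t \<in> I_k \<tau> k. ennreal (Fm t powr pp) \<partial>lebesgue) = ennreal (phi \<tau> k)"
      using phi_props(1)[OF tau] k by simp
    show "0 \<le> phi \<tau> k" by (rule phi_props(2)[OF tau])
    show "AE t in lebesgue. t \<in> I_k \<tau> k \<longrightarrow> \<bar>blinfun_apply (f t) w\<bar> \<le> s powr p / s + 1 / s * Fm t powr pp"
      using aeI Fm(3)
    proof eventually_elim
      case (elim t)
      show ?case
      proof
        assume "t \<in> I_k \<tau> k"
        then have nf: "norm (f t) = Fm t" using elim by blast
        have "\<bar>blinfun_apply (f t) w\<bar> \<le> norm (f t) * norm w"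
          using norm_blinfun[of "f t" w] by simp
        also have "\<dots> \<le> Fm t" using nf w Fm(2)[of t] by (simp add: mult_left_le)
        also have "\<dots> \<le> s powr p / s + 1 / s * Fm t powr pp"
        proof -
          have "s * Fm t \<le> s powr p + Fm t powr (p / (p - 1))"
            by (rule young1) (use s Fm(2) pq in auto)
          then have "s * Fm t \<le> s powr p + Fm t powr pp" unfolding pp_def .
          then have "Fm t \<le> (s powr p + Fm t powr pp) / s" using s by (simp add: pos_le_divide_eq mult.commute)
          then show ?thesis by (simp add: add_divide_distrib)
        qed
        finally show "\<bar>blinfun_apply (f t) w\<bar> \<le> s powr p / s + 1 / s * Fm t powr pp" .
      qed
    qed
  qed
  then have "(1 / \<tau>) * \<bar>LINT t : I_k \<tau> k | lebesgue. blinfun_apply (f t) w\<bar> \<le> (1 / \<tau>) * ((s powr p / s) * \<tau> + (1 / s) * phi \<tau> k)"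
    using tau(1) by (intro mult_left_mono) auto
  also have "\<dots> = s powr p / s + phi \<tau> k / (s * \<tau>)" using tau(1) s by (simp add: field_simps)
  finally show ?thesis unfolding avg_f_def using tau(1) by (simp add: abs_mult)
qed

lemma Aw_bound:
  assumes tau: "0 < \<tau>" "\<tau> = T / real K" and k: "1 \<le> k" "k \<le> K" and w: "norm w \<le> 1" and s: "0 < s"
    and jx: "norm (j x) \<le> sqrt Rc"
  shows "\<bar>avg_A \<tau> k A x w\<bar> \<le> (1 / s) * (lam * norm x powr p + \<gamma> * Rq + \<gamma> * 1)
      + 1 * ((\<gamma> * s powr (q - 1)) * Kj powr q + (\<gamma> * s powr (p - 1)) * 1)"
proof -
  define Ca where "Ca = (1 / s) * (lam * norm x powr p + \<gamma> * Rq + \<gamma> * 1)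
      + 1 * ((\<gamma> * s powr (q - 1)) * Kj powr q + (\<gamma> * s powr (p - 1)) * 1)"
  have Ca0: "0 \<le> Ca" unfolding Ca_def Rq_def using cst s by simp
  have aeI: "AE t in lebesgue. t \<in> I_k \<tau> k \<longrightarrow> t \<in> {0<..<T}" by (rule AE_Ik[OF tau k])
  have jw: "norm (j w) powr q \<le> Kj powr q"
  proof -
    have "norm (j w) \<le> Kj * norm w" by (rule Kj(2))
    also have "\<dots> \<le> Kj" using w Kj(1) by (simp add: mult_left_le)
    finally show ?thesis using pq by (intro powr_mono2) auto
  qed
  have "norm w powr p \<le> 1 powr p" using w pq by (intro powr_mono2) auto
  then have nw: "norm w powr p \<le> 1" by simp
  have jxq: "norm (j x) powr q \<le> Rq" unfolding Rq_def using jx pq by (intro powr_mono2) auto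
  have "\<bar>LINT t : I_k \<tau> k | lebesgue. blinfun_apply (A t x) w\<bar> \<le> Ca * \<tau> + 0 * 0"
  proof (rule set_int_bound2[OF Ik_sets Ik_measure[OF tau(1)], where H="\<lambda>_. 0"])
    show "0 \<le> \<tau>" using tau by simp
    show "(\<integral>\<^sup>+ t \<in> I_k \<tau> k. ennreal 0 \<partial>lebesgue) = ennreal 0" by simp
    show "AE t in lebesgue. t \<in> I_k \<tau> k \<longrightarrow> \<bar>blinfun_apply (A t x) w\<bar> \<le> Ca + 0 * 0"
      using aeI A4
    proof eventually_elim
      case (elim t)
      show ?case
      proof
        assume "t \<in> I_k \<tau> k"
        then have A4t: "\<forall>x y. \<bar>blinfun_apply (A t x) y\<bar> \<le> lam * norm x powr p
                  + \<gamma> * (1 + norm (j x) powr q + norm (j y) powr q + norm y powr p)" using elim by blast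
        have "\<bar>blinfun_apply (A t x) w\<bar> \<le> (1 / s) * (lam * norm x powr p + \<gamma> * norm (j x) powr q + \<gamma> * 1)
            + 1 * ((\<gamma> * s powr (q - 1)) * norm (j w) powr q + (\<gamma> * s powr (p - 1)) * norm w powr p)"
          by (rule s_bound_pt[OF s A4t])
        also have "\<dots> \<le> Ca"
        proof -
          have h1: "\<gamma> * norm (j x) powr q \<le> \<gamma> * Rq" using jxq cst by (intro mult_left_mono) auto
          have h2: "\<gamma> * s powr (q - 1) * norm (j w) powr q \<le> \<gamma> * s powr (q - 1) * Kj powr q"
            using jw cst by (intro mult_left_mono) auto
          have h3: "\<gamma> * s powr (p - 1) * norm w powr p \<le> \<gamma> * s powr (p - 1) * 1"
            using nw cst by (intro mult_left_mono) auto
          have h4: "(1 / s) * (lam * norm x powr p + \<gamma> * norm (j x) powr q + \<gamma> * 1) \<le> (1 / s) * (lam * norm x powr p + \<gamma> * Rq + \<gamma> * 1)"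
            using h1 s by (intro mult_left_mono) auto
          show ?thesis unfolding Ca_def using h2 h3 h4 by simp
        qed
        finally show "\<bar>blinfun_apply (A t x) w\<bar> \<le> Ca + 0 * 0" by simp
      qed
    qed
  qed (use Ca0 in auto)
  then have "(1 / \<tau>) * \<bar>LINT t : I_k \<tau> k | lebesgue. blinfun_apply (A t x) w\<bar> \<le> (1 / \<tau>) * (Ca * \<tau>)"
    using tau(1) by (intro mult_left_mono) auto
  also have "\<dots> = Ca" using tau(1) by simp
  finally show ?thesis unfolding avg_A_def Ca_def using tau(1) by (simp add: abs_mult)
qed

lemma c4_nn: "0 \<le> c4" unfolding c4_def using cst by simp

lemma bk_nn: assumes "0 < \<tau>" "\<tau> = T / real K" shows "0 \<le> bk \<tau> xs k"
proof -
  have "0 \<le> phi \<tau> k" by (rule phi_props(2)[OF assms])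
  then have "0 \<le> phi \<tau> k / \<tau>" using assms(1) by simp
  moreover have "0 \<le> lam * norm (xs k) powr p" "0 \<le> \<gamma> * (1 + Rq)" unfolding Rq_def using cst by simp_all
  ultimately show ?thesis unfolding bk_def by linarith
qed

lemma diff_bound:
  assumes tau: "0 < \<tau>" "\<tau> = T / real K" and small: "4 * c1 * \<tau> < 1"
    and rg: "RG_solution j A f (Vn n) \<tau> K (x0n n) xs"
    and k: "1 \<le> k" "k \<le> K" and w: "norm w \<le> 1"
  shows "\<bar>avg_f \<tau> k f w - avg_A \<tau> k A (xs k) w\<bar> \<le> c4 * (1 + bk \<tau> xs k) powr (1 - 1 / q)"
proof -
  define \<beta> where "\<beta> = 1 + bk \<tau> xs k"
  have b1: "1 \<le> \<beta>" unfolding \<beta>_def using bk_nn[OF tau] by simp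
  define s where "s = \<beta> powr (1 / q)"
  have s1: "1 \<le> s" unfolding s_def using b1 pq by (intro ge_one_powr_ge_zero) auto
  have s0: "0 < s" using s1 by simp
  have Sq: "s powr q = \<beta>" unfolding s_def using b1 pq by (simp add: powr_powr)
  have Sp: "s powr p \<le> \<beta>" using powr_mono[OF pq(2) s1] Sq by simp
  have jx: "norm (j (xs k)) \<le> sqrt Rc" using energy(1)[OF tau small rg, of k] k by (simp add: real_le_rsqrt)
  have F: "\<bar>avg_f \<tau> k f w\<bar> \<le> s powr p / s + phi \<tau> k / (s * \<tau>)" by (rule fw_bound[OF tau k w s0])
  have A: "\<bar>avg_A \<tau> k A (xs k) w\<bar> \<le> (1 / s) * (lam * norm (xs k) powr p + \<gamma> * Rq + \<gamma> * 1)
      + 1 * ((\<gamma> * s powr (q - 1)) * Kj powr q + (\<gamma> * s powr (p - 1)) * 1)"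
    by (rule Aw_bound[OF tau k w s0 jx])
  have sq1: "s powr (q - 1) = s powr q / s" "s powr (p - 1) = s powr p / s"
    using s0 by (simp_all add: powr_diff)
  have "s powr p / s + phi \<tau> k / (s * \<tau>) + ((1 / s) * (lam * norm (xs k) powr p + \<gamma> * Rq + \<gamma> * 1)
      + 1 * ((\<gamma> * s powr (q - 1)) * Kj powr q + (\<gamma> * s powr (p - 1)) * 1))
      = (bk \<tau> xs k + (1 + \<gamma>) * s powr p + \<gamma> * Kj powr q * s powr q) / s"
    unfolding sq1 bk_def using s0 tau(1) by (simp add: field_simps)
  also have "\<dots> \<le> (\<beta> + (1 + \<gamma>) * \<beta> + \<gamma> * Kj powr q * \<beta>) / s"
  proof (rule divide_right_mono)
    have "(1 + \<gamma>) * s powr p \<le> (1 + \<gamma>) * \<beta>" using Sp cst by (intro mult_left_mono) auto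
    moreover have "bk \<tau> xs k \<le> \<beta>" unfolding \<beta>_def by simp
    ultimately show "bk \<tau> xs k + (1 + \<gamma>) * s powr p + \<gamma> * Kj powr q * s powr q \<le> \<beta> + (1 + \<gamma>) * \<beta> + \<gamma> * Kj powr q * \<beta>"
      using Sq by simp
  qed (use s0 in simp)
  also have "\<dots> = c4 * (\<beta> / s)" unfolding c4_def by (simp add: field_simps)
  also have "\<beta> / s = \<beta> powr (1 - 1 / q)" unfolding s_def using b1 by (simp add: powr_diff)
  finally have "\<bar>avg_f \<tau> k f w\<bar> + \<bar>avg_A \<tau> k A (xs k) w\<bar> \<le> c4 * \<beta> powr (1 - 1 / q)"
    using F A by linarith
  then show ?thesis unfolding \<beta>_def by linarith
qed

end

context data begin

lemma en_bound:
  assumes tau: "0 < \<tau>" "\<tau> = T / real K" and small: "4 * c1 * \<tau> < 1"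
    and rg: "RG_solution j A f (Vn n) \<tau> K (x0n n) xs" and t: "t \<in> {0<..<T}"
  shows "en_norm j (Vn n) (xhat \<tau> xs t - xbar \<tau> xs t) \<le> \<tau> * (c4 * (1 + bk \<tau> xs (nat \<lceil>t / \<tau>\<rceil>)) powr (1 - 1 / q))"
    and "0 \<le> en_norm j (Vn n) (xhat \<tau> xs t - xbar \<tau> xs t)"
proof -
  define k where "k = nat \<lceil>t / \<tau>\<rceil>"
  define \<mu> where "\<mu> = real k - t / \<tau>"
  define B where "B = \<tau> * (c4 * (1 + bk \<tau> xs k) powr (1 - 1 / q))"
  have cb: "real k - 1 < t / \<tau>" "t / \<tau> \<le> real k" "1 \<le> k" "k \<le> K"
    using ceil_bounds[OF tau t] unfolding k_def by auto
  have mu: "0 \<le> \<mu>" "\<mu> \<le> 1" using cb unfolding \<mu>_def by auto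
  have lin: "linear j" using j_lin by (rule bounded_linear.linear)
  have diff: "xhat \<tau> xs t - xbar \<tau> xs t = \<mu> *\<^sub>R (xs (k - 1) - xs k)"
  proof -
    have a: "t / \<tau> - (real k - 1) = 1 - \<mu>" unfolding \<mu>_def by simp
    have b: "real k - t / \<tau> = \<mu>" unfolding \<mu>_def by simp
    show ?thesis unfolding xhat_eq xbar_step k_def[symmetric] a b by (simp add: algebra_simps)
  qed
  define S where "S = {\<bar>inner (j (xhat \<tau> xs t - xbar \<tau> xs t)) (j w)\<bar> | w. w \<in> Vn n \<and> norm w \<le> 1}"
  have el: "x \<le> B" if "x \<in> S" for x
  proof -
    obtain w where w: "w \<in> Vn n" "norm w \<le> 1" and x: "x = \<bar>inner (j (xhat \<tau> xs t - xbar \<tau> xs t)) (j w)\<bar>"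
      using \<open>x \<in> S\<close> unfolding S_def by blast
    have eq: "inner ((1 / \<tau>) *\<^sub>R (j (xs k) - j (xs (k - 1)))) (j w) + avg_A \<tau> k A (xs k) w = avg_f \<tau> k f w"
      using rg cb w(1) unfolding RG_solution_def by auto
    have "inner (j (xhat \<tau> xs t - xbar \<tau> xs t)) (j w) = \<mu> * inner (j (xs (k - 1)) - j (xs k)) (j w)"
      unfolding diff by (simp add: linear_scale[OF lin] linear_diff[OF lin])
    also have "\<dots> = - (\<mu> * \<tau>) * inner ((1 / \<tau>) *\<^sub>R (j (xs k) - j (xs (k - 1)))) (j w)"
      using tau(1) by (simp add: inner_diff_left algebra_simps)
    also have "\<dots> = - (\<mu> * \<tau>) * (avg_f \<tau> k f w - avg_A \<tau> k A (xs k) w)"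
    proof -
      have eq2: "inner ((1 / \<tau>) *\<^sub>R (j (xs k) - j (xs (k - 1)))) (j w) = avg_f \<tau> k f w - avg_A \<tau> k A (xs k) w"
        using eq by linarith
      show ?thesis by (simp only: eq2)
    qed
    finally have "x = (\<mu> * \<tau>) * \<bar>avg_f \<tau> k f w - avg_A \<tau> k A (xs k) w\<bar>"
      unfolding x using mu tau(1) by (simp add: abs_mult)
    also have "\<dots> \<le> (\<mu> * \<tau>) * (c4 * (1 + bk \<tau> xs k) powr (1 - 1 / q))"
      using diff_bound[OF tau small rg cb(3,4) w(2)] mu tau(1) by (intro mult_left_mono) auto
    also have "\<dots> \<le> B" unfolding B_def
      using mu tau(1) c4_nn by (intro mult_right_mono) (auto intro: mult_right_le_one_le)
    finally show ?thesis .
  qed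
  have z: "0 \<in> S"
  proof -
    have "0 \<in> Vn n" using Vn_sub[of n] by (rule subspace_0)
    moreover have "\<bar>inner (j (xhat \<tau> xs t - xbar \<tau> xs t)) (j 0)\<bar> = 0" by (simp add: linear_0[OF lin])
    ultimately show ?thesis unfolding S_def by force
  qed
  have "Sup S \<le> B" using z el by (intro cSup_least) auto
  then show "en_norm j (Vn n) (xhat \<tau> xs t - xbar \<tau> xs t) \<le> \<tau> * (c4 * (1 + bk \<tau> xs (nat \<lceil>t / \<tau>\<rceil>)) powr (1 - 1 / q))"
    unfolding en_norm_def S_def[symmetric] B_def k_def .
  have bdd: "bdd_above S" using el by (rule bdd_aboveI)
  have "0 \<le> Sup S" using z bdd by (rule cSup_upper)
  then show "0 \<le> en_norm j (Vn n) (xhat \<tau> xs t - xbar \<tau> xs t)"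
    unfolding en_norm_def S_def[symmetric] .
qed

definition "Bt = T + Ftot + lam * Sx + T * \<gamma> * (1 + Rq)"
definition "M4 = c4 * Bt powr (1 / (q / (q - 1)))"

lemma claim4:
  assumes tau: "0 < \<tau>" "\<tau> = T / real K" and small: "4 * c1 * \<tau> < 1"
    and rg: "RG_solution j A f (Vn n) \<tau> K (x0n n) xs"
  shows "Lp_norm (q / (q - 1)) T (\<lambda>t. en_norm j (Vn n) (xhat \<tau> xs t - xbar \<tau> xs t))
           \<le> \<tau> * (Lp_norm (p / (p - 1)) T f + M4)"
proof -
  define qq where "qq = q / (q - 1)"
  have qq: "0 < qq" "(1 - 1 / q) * qq = 1" unfolding qq_def using pq by (simp_all add: field_simps)
  define E where "E t = en_norm j (Vn n) (xhat \<tau> xs t - xbar \<tau> xs t)" for t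
  define \<beta> where "\<beta> k = 1 + bk \<tau> xs k" for k
  define Bk where "Bk k = \<tau> * (c4 * \<beta> k powr (1 - 1 / q))" for k
  have b1: "1 \<le> \<beta> k" for k unfolding \<beta>_def using bk_nn[OF tau] by simp
  have Bk0: "0 \<le> Bk k" for k unfolding Bk_def using tau(1) c4_nn by simp
  have Bkq: "Bk k powr qq = (\<tau> * c4) powr qq * \<beta> k" for k
  proof -
    have "Bk k powr qq = (\<tau> * c4) powr qq * (\<beta> k powr (1 - 1 / q)) powr qq"
      unfolding Bk_def using tau(1) c4_nn b1[of k] by (simp add: powr_mult mult.assoc)
    also have "(\<beta> k powr (1 - 1 / q)) powr qq = \<beta> k"
      using b1[of k] qq by (simp add: powr_powr)
    finally show ?thesis .
  qed
  have pt: "E t \<le> Bk (nat \<lceil>t / \<tau>\<rceil>)" "0 \<le> E t" if "t \<in> {0<..<T}" for t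
    unfolding E_def Bk_def \<beta>_def using en_bound[OF tau small rg that] by simp_all
  have "Lp_int qq T E \<le> (\<integral>\<^sup>+ t \<in> {0<..<T}. (\<lambda>k. ennreal (Bk k powr qq)) (nat \<lceil>t / \<tau>\<rceil>) \<partial>lebesgue)"
    unfolding Lp_int_def
  proof (rule nn_integral_mono)
    fix t
    show "ennreal (norm (E t) powr qq) * indicator {0<..<T} t \<le> ennreal (Bk (nat \<lceil>t / \<tau>\<rceil>) powr qq) * indicator {0<..<T} t"
    proof (cases "t \<in> {0<..<T}")
      case True
      have "norm (E t) powr qq \<le> Bk (nat \<lceil>t / \<tau>\<rceil>) powr qq"
        using pt[OF True] qq(1) by (intro powr_mono2) auto
      then show ?thesis using True by (simp add: ennreal_leI)
    qed simp
  qed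
  also have "\<dots> = (\<Sum>k\<in>{1..K}. ennreal \<tau> * ennreal (Bk k powr qq))" by (rule step_int[OF tau])
  also have "\<dots> = ennreal ((\<tau> * c4) powr qq * (\<Sum>k\<in>{1..K}. \<tau> * \<beta> k))"
  proof -
    have "(\<Sum>k\<in>{1..K}. ennreal \<tau> * ennreal (Bk k powr qq)) = (\<Sum>k\<in>{1..K}. ennreal (\<tau> * Bk k powr qq))"
      using tau(1) by (simp add: ennreal_mult)
    also have "\<dots> = ennreal (\<Sum>k\<in>{1..K}. \<tau> * Bk k powr qq)"
      using tau(1) by (intro sum_ennreal) simp
    also have "(\<Sum>k\<in>{1..K}. \<tau> * Bk k powr qq) = (\<tau> * c4) powr qq * (\<Sum>k\<in>{1..K}. \<tau> * \<beta> k)"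
      unfolding Bkq by (simp add: sum_distrib_left algebra_simps)
    finally show ?thesis .
  qed
  also have "\<dots> \<le> ennreal ((\<tau> * c4) powr qq * Bt)"
  proof (rule ennreal_leI, rule mult_left_mono)
    have K0: "real K > 0" using tau by (cases "K = 0") auto
    have TK: "\<tau> * real K = T" using tau(2) K0 by simp
    have "(\<Sum>k\<in>{1..K}. \<tau> * \<beta> k) = (\<Sum>k\<in>{1..K}. \<tau> * (1 + \<gamma> * (1 + Rq)) + phi \<tau> k + lam * (\<tau> * norm (xs k) powr p))"
      unfolding \<beta>_def bk_def using tau(1) by (intro sum.cong) (simp_all add: field_simps)
    also have "\<dots> = T * (1 + \<gamma> * (1 + Rq)) + Ftot + lam * (\<Sum>k\<in>{1..K}. \<tau> * norm (xs k) powr p)"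
      by (simp only: sum.distrib sum_constant card_atLeastAtMost phi_props(3)[OF tau] sum_distrib_left[symmetric])
         (use TK in \<open>simp add: algebra_simps\<close>)
    also have "\<dots> \<le> T * (1 + \<gamma> * (1 + Rq)) + Ftot + lam * Sx"
      using energy(2)[OF tau small rg] cst by (simp add: mult_left_mono)
    also have "\<dots> = Bt" unfolding Bt_def by (simp add: algebra_simps)
    finally show "(\<Sum>k\<in>{1..K}. \<tau> * \<beta> k) \<le> Bt" .
  qed simp
  finally have LI: "Lp_int qq T E \<le> ennreal ((\<tau> * c4) powr qq * Bt)" .
  have Bt0: "0 \<le> Bt"
  proof -
    have "0 \<le> Sx" unfolding Sx_def using Rc_nn Gc_nn cst T by simp
    then show ?thesis unfolding Bt_def Rq_def using T cst Ftot_nn by simp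
  qed
  have "Lp_norm qq T E = enn2real (Lp_int qq T E) powr (1 / qq)" unfolding Lp_norm_def ..
  also have "\<dots> \<le> ((\<tau> * c4) powr qq * Bt) powr (1 / qq)"
    using enn2real_leI[OF _ LI] Bt0 qq(1) by (intro powr_mono2) auto
  also have "\<dots> = \<tau> * M4"
    unfolding M4_def qq_def[symmetric] using tau(1) c4_nn Bt0 qq(1) by (simp add: powr_mult powr_powr)
  also have "\<dots> \<le> \<tau> * (Lp_norm (p / (p - 1)) T f + M4)"
    using tau(1) by (intro mult_left_mono) (auto simp: Lp_norm_def)
  finally show ?thesis unfolding qq_def E_def .
qed

lemma main_bound:
  "\<exists>M>0. \<forall>K n \<tau> (xs :: nat \<Rightarrow> 'x).
           \<tau> = T / real K \<and> 0 < \<tau> \<and> 4 * c1 * \<tau> < 1 \<and>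
           RG_solution j A f (Vn n) \<tau> K (x0n n) xs \<longrightarrow>
             LpLinf_norm p T j (xbar \<tau> xs) \<le> M \<and>
             Linf_norm T (\<lambda>t. j (xhat \<tau> xs t)) \<le> M \<and>
             (\<forall>y \<in> LpLq p q T j.
                \<bar>LINT t : {0<..<T} | lebesgue. blinfun_apply (A t (xbar \<tau> xs t)) (y t)\<bar>
                  \<le> M * LpLq_norm p q T j y) \<and>
             Lp_norm (q / (q - 1)) T (\<lambda>t. en_norm j (Vn n) (xhat \<tau> xs t - xbar \<tau> xs t))
               \<le> \<tau> * (Lp_norm (p / (p - 1)) T f + M)"
proof -
  define M1 where "M1 = Sx powr (1 / p) + sqrt Rc"
  define M where "M = 1 + M1 + M3 + M4"
  have Sx0: "0 \<le> Sx" unfolding Sx_def using Rc_nn Gc_nn cst T by simp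
  have M10: "0 \<le> M1" unfolding M1_def using Rc_nn by simp
  have M30: "0 \<le> M3" unfolding M3_def using Sx0 cst T by simp
  have M40: "0 \<le> M4" unfolding M4_def using c4_nn by simp
  have sR: "sqrt Rc \<le> M1" unfolding M1_def by simp
  have "M > 0" unfolding M_def using M10 M30 M40 by simp
  moreover have "LpLinf_norm p T j (xbar \<tau> xs) \<le> M \<and>
             Linf_norm T (\<lambda>t. j (xhat \<tau> xs t)) \<le> M \<and>
             (\<forall>y \<in> LpLq p q T j.
                \<bar>LINT t : {0<..<T} | lebesgue. blinfun_apply (A t (xbar \<tau> xs t)) (y t)\<bar>
                  \<le> M * LpLq_norm p q T j y) \<and>
             Lp_norm (q / (q - 1)) T (\<lambda>t. en_norm j (Vn n) (xhat \<tau> xs t - xbar \<tau> xs t))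
               \<le> \<tau> * (Lp_norm (p / (p - 1)) T f + M)"
    if h: "\<tau> = T / real K" "0 < \<tau>" "4 * c1 * \<tau> < 1" "RG_solution j A f (Vn n) \<tau> K (x0n n) xs"
    for K n \<tau> and xs :: "nat \<Rightarrow> 'x"
  proof (intro conjI ballI)
    have tau: "0 < \<tau>" "\<tau> = T / real K" using h by auto
    show "LpLinf_norm p T j (xbar \<tau> xs) \<le> M"
      using claim1(1)[OF tau h(3,4)] M30 M40 unfolding M_def M1_def by linarith
    show "Linf_norm T (\<lambda>t. j (xhat \<tau> xs t)) \<le> M"
      using claim2[OF tau h(3,4)] sR M30 M40 unfolding M_def by linarith
    fix y assume y: "y \<in> LpLq p q T j"
    have N0: "0 \<le> LpLq_norm p q T j y" unfolding LpLq_norm_def Lp_norm_def by simp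
    have "M3 * LpLq_norm p q T j y \<le> M * LpLq_norm p q T j y"
      using N0 M10 M40 unfolding M_def by (intro mult_right_mono) auto
    then show "\<bar>LINT t : {0<..<T} | lebesgue. blinfun_apply (A t (xbar \<tau> xs t)) (y t)\<bar> \<le> M * LpLq_norm p q T j y"
      using claim3[OF tau h(3,4) y] by linarith
  next
    have tau: "0 < \<tau>" "\<tau> = T / real K" using h by auto
    have "\<tau> * (Lp_norm (p / (p - 1)) T f + M4) \<le> \<tau> * (Lp_norm (p / (p - 1)) T f + M)"
      using tau(1) M10 M30 unfolding M_def by (intro mult_left_mono) auto
    then show "Lp_norm (q / (q - 1)) T (\<lambda>t. en_norm j (Vn n) (xhat \<tau> xs t - xbar \<tau> xs t)) \<le> \<tau> * (Lp_norm (p / (p - 1)) T f + M)"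
      using claim4[OF tau h(3,4)] by linarith
  qed
  ultimately show ?thesis by blast
qed

end

theorem mainTheorem8:
  fixes j :: "'x::banach \<Rightarrow> 'y::{real_inner, complete_space}"
    and V :: "'x set" and H :: "'y set"
    and Vn :: "nat \<Rightarrow> 'x set"
    and T p q c0 c1 c2 lam \<gamma> :: real
    and x0 :: 'y and x0n :: "nat \<Rightarrow> 'x"
    and f :: "real \<Rightarrow> ('x \<Rightarrow>\<^sub>L real)"
    and A :: "real \<Rightarrow> 'x \<Rightarrow> ('x \<Rightarrow>\<^sub>L real)"
  assumes T: "0 < T"
    and pq: "1 < p" "p \<le> q"
    \<comment> \<open>(i) evolution triples (X,Y,j) and (V,H,j)\<close>
    and X_refl: "reflexive_space TYPE('x)"
    and j_lin: "bounded_linear j" and j_inj: "inj j" and j_dense: "closure (range j) = UNIV"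
    and V_sub: "subspace V" and V_closed: "closed V"
    and H_sub: "subspace H" and H_closed: "closed H"
    and jV: "j ` V \<subseteq> H" and jV_dense: "H \<subseteq> closure (j ` V)"
    \<comment> \<open>(i) quasi non-conforming approximation (V_n)\<close>
    and Vn_sub: "\<And>n. subspace (Vn n)" and Vn_closed: "\<And>n. closed (Vn n)"
    and QNC1: "\<exists>D\<subseteq>V. V \<subseteq> closure D \<and>
                 (\<forall>v\<in>D. \<exists>vs. (\<forall>n. vs n \<in> Vn n) \<and> vs \<longlonglongrightarrow> v)"
    and QNC2: "\<And>(xs :: nat \<Rightarrow> real \<Rightarrow> 'x) (m :: nat \<Rightarrow> nat) x.
                 (\<forall>i. xs i \<in> LpV p T (Vn (m i))) \<Longrightarrow> filterlim m at_top sequentially \<Longrightarrow>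
                 Lp_weak_conv p T xs x \<Longrightarrow> x \<in> LpV p T V"
    \<comment> \<open>(ii) initial data\<close>
    and x0: "x0 \<in> H" and x0n: "\<And>n. x0n n \<in> Vn n"
    and x0n_conv: "(\<lambda>n. j (x0n n)) \<longlonglongrightarrow> x0"
    and x0n_bd: "\<And>n. norm (j (x0n n)) \<le> norm x0"
    \<comment> \<open>(iii) right-hand side\<close>
    and f: "f \<in> Lp (p / (p - 1)) T"
    \<comment> \<open>(iv) the operator family\<close>
    and A1: "AE t in lebesgue. t \<in> {0<..<T} \<longrightarrow> pseudo_monotone (A t)"
    and A2: "\<And>x. bochner_measurable T (\<lambda>t. A t x)"
    and cst: "0 < c0" "0 \<le> c1" "0 \<le> c2" "0 \<le> \<gamma>" "0 < lam" "lam < c0"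
    and A3: "AE t in lebesgue. t \<in> {0<..<T} \<longrightarrow>
               (\<forall>x. blinfun_apply (A t x) x \<ge> c0 * norm x powr p - c1 * (norm (j x))\<^sup>2 - c2)"
    and A4: "AE t in lebesgue. t \<in> {0<..<T} \<longrightarrow>
               (\<forall>x y. \<bar>blinfun_apply (A t x) y\<bar> \<le> lam * norm x powr p
                  + \<gamma> * (1 + norm (j x) powr q + norm (j y) powr q + norm y powr p))"
  shows "\<exists>M>0. \<forall>K n \<tau> (xs :: nat \<Rightarrow> 'x).
           \<tau> = T / real K \<and> 0 < \<tau> \<and> 4 * c1 * \<tau> < 1 \<and>
           RG_solution j A f (Vn n) \<tau> K (x0n n) xs \<longrightarrow>
             LpLinf_norm p T j (xbar \<tau> xs) \<le> M \<and>
             Linf_norm T (\<lambda>t. j (xhat \<tau> xs t)) \<le> M \<and>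
             (\<forall>y \<in> LpLq p q T j.
                \<bar>LINT t : {0<..<T} | lebesgue. blinfun_apply (A t (xbar \<tau> xs t)) (y t)\<bar>
                  \<le> M * LpLq_norm p q T j y) \<and>
             Lp_norm (q / (q - 1)) T (\<lambda>t. en_norm j (Vn n) (xhat \<tau> xs t - xbar \<tau> xs t))
               \<le> \<tau> * (Lp_norm (p / (p - 1)) T f + M)"
proof -
  obtain Kj where Kj: "0 < Kj" "\<And>x. norm (j x) \<le> Kj * norm x"
    using bounded_linear.pos_bounded[OF j_lin] by (auto simp: mult.commute)
  have fbm: "bochner_measurable T f" and Ffin: "Lp_int (p / (p - 1)) T f < \<infinity>"
    using f unfolding Lp_def by auto
  obtain Fm where Fm: "Fm \<in> borel_measurable lebesgue" "\<forall>t. 0 \<le> Fm t"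
      "AE t in lebesgue. t \<in> {0<..<T} \<longrightarrow> norm (f t) = Fm t"
    using meas_version_nn[OF fbm] by blast
  have Fm2: "\<And>t. 0 \<le> Fm t" using Fm(2) by blast
  interpret data j Vn T p q c0 c1 c2 lam \<gamma> Kj x0 x0n f A Fm
    by (intro data.intro) (rule T pq(1) pq(2) j_lin Kj(1) Kj(2) Vn_sub x0n_bd Fm(1) Fm2 Fm(3) Ffin A2
        cst(1) cst(2) cst(3) cst(4) cst(5) cst(6) A3 A4)+
  show ?thesis by (rule main_bound)
qed

end
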